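(* Let $K$ be a differential field which is a $C_1$-field (e.g. a finite extension of $\mathbb{C}(z)$). Let $M$ be an irreducible differential module over $K$ with $\dim M=3$ and $\det M=\mathbf{1}$. Then $M$ is isomorphic to $\mathrm{sym}^2N$ for some differential module $N$ with $\dim N=2$ and $\det N=\mathbf{1}$ if and only if $\mathrm{sym}^2M$ contains an element $F\neq 0$ with $\partial F=0$.
   Context: A differential module over $K$ is a finite-dimensional $K$-vector space with an additive map $\partial$ satisfying the Leibniz rule; $\mathrm{sym}^2M$ carries the induced derivation, $\det M=\Lambda^{\dim M}M$, and $\mathbf{1}$ is the trivial one-dimensional module. Irreducible means no nonzero proper $\partial$-invariant subspace. *)

theory Defs
  imports Main
begin

(* Differential field: the whole type 'a is the field K, d its derivation. *)
definition diff_field :: "('a::field \<Rightarrow> 'a) \<Rightarrow> bool" where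
  "diff_field d \<longleftrightarrow> (\<forall>x y. d (x + y) = d x + d y) \<and> (\<forall>x y. d (x * y) = d x * y + x * d y)"

(* A form is given by its coefficient function on the
   (finite) set of exponent vectors of total degree r in variables 0..m-1. *)
definition monomials :: "nat \<Rightarrow> nat \<Rightarrow> (nat \<Rightarrow> nat) set" where
  "monomials m r = {\<alpha>. (\<forall>i. m \<le> i \<longrightarrow> \<alpha> i = 0) \<and> (\<Sum>i<m. \<alpha> i) = r}"

definition form_eval :: "nat \<Rightarrow> nat \<Rightarrow> ((nat \<Rightarrow> nat) \<Rightarrow> 'a::comm_ring_1) \<Rightarrow> (nat \<Rightarrow> 'a) \<Rightarrow> 'a" where
  "form_eval m r c x = (\<Sum>\<alpha>\<in>monomials m r. c \<alpha> * (\<Prod>i<m. x i ^ \<alpha> i))"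

definition C1_field :: "'a::field itself \<Rightarrow> bool" where
  "C1_field _ \<longleftrightarrow> (\<forall>(m::nat) (r::nat) (c::(nat \<Rightarrow> nat) \<Rightarrow> 'a). 1 \<le> r \<and> r < m \<longrightarrow>
      (\<exists>x. (\<exists>i<m. x i \<noteq> 0) \<and> form_eval m r c x = 0))"

definition vzero :: "'i \<Rightarrow> 'a::zero" where "vzero = (\<lambda>_. 0)"
definition vadd :: "('i \<Rightarrow> 'a::plus) \<Rightarrow> ('i \<Rightarrow> 'a) \<Rightarrow> 'i \<Rightarrow> 'a" where
  "vadd u v = (\<lambda>x. u x + v x)"
definition vscale :: "'a::times \<Rightarrow> ('i \<Rightarrow> 'a) \<Rightarrow> 'i \<Rightarrow> 'a" where
  "vscale c v = (\<lambda>x. c * v x)"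
definition lincomb :: "(nat \<Rightarrow> 'a::comm_ring_1) \<Rightarrow> (nat \<Rightarrow> 'i \<Rightarrow> 'a) \<Rightarrow> nat \<Rightarrow> 'i \<Rightarrow> 'a" where
  "lincomb c b n = (\<lambda>x. \<Sum>k<n. c k * b k x)"

definition is_basis :: "('i \<Rightarrow> 'a::field) set \<Rightarrow> nat \<Rightarrow> (nat \<Rightarrow> 'i \<Rightarrow> 'a) \<Rightarrow> bool" where
  "is_basis V n b \<longleftrightarrow> (\<forall>c. lincomb c b n = vzero \<longrightarrow> (\<forall>k<n. c k = 0))
                      \<and> V = {lincomb c b n | c. True}"

definition has_dim :: "('i \<Rightarrow> 'a::field) set \<Rightarrow> nat \<Rightarrow> bool" where
  "has_dim V n \<longleftrightarrow> (\<exists>b. is_basis V n b)"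

definition subspace_of :: "('i \<Rightarrow> 'a::field) set \<Rightarrow> ('i \<Rightarrow> 'a) set \<Rightarrow> bool" where
  "subspace_of W V \<longleftrightarrow> W \<subseteq> V \<and> vzero \<in> W \<and> (\<forall>u\<in>W. \<forall>v\<in>W. vadd u v \<in> W)
                       \<and> (\<forall>c. \<forall>v\<in>W. vscale c v \<in> W)"

type_synonym ('i, 'a) dmodule = "('i \<Rightarrow> 'a) set \<times> (('i \<Rightarrow> 'a) \<Rightarrow> ('i \<Rightarrow> 'a))"

definition dmod :: "('a::field \<Rightarrow> 'a) \<Rightarrow> ('i, 'a) dmodule \<Rightarrow> bool" where
  "dmod d M \<longleftrightarrow> (\<exists>n. has_dim (fst M) n) \<and> (\<forall>x\<in>fst M. snd M x \<in> fst M)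
     \<and> (\<forall>x\<in>fst M. \<forall>y\<in>fst M. snd M (vadd x y) = vadd (snd M x) (snd M y))
     \<and> (\<forall>c. \<forall>x\<in>fst M. snd M (vscale c x) = vadd (vscale (d c) x) (vscale c (snd M x)))"

definition irreducible_dmod :: "('a::field \<Rightarrow> 'a) \<Rightarrow> ('i, 'a) dmodule \<Rightarrow> bool" where
  "irreducible_dmod d M \<longleftrightarrow> dmod d M \<and> fst M \<noteq> {vzero} \<and>
     (\<forall>W. subspace_of W (fst M) \<and> (\<forall>x\<in>W. snd M x \<in> W) \<longrightarrow> W = {vzero} \<or> W = fst M)"

definition dmod_iso :: "('i, 'a::field) dmodule \<Rightarrow> ('j, 'a) dmodule \<Rightarrow> bool" where
  "dmod_iso M N \<longleftrightarrow> (\<exists>f. bij_betw f (fst M) (fst N)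
     \<and> (\<forall>x\<in>fst M. \<forall>y\<in>fst M. f (vadd x y) = vadd (f x) (f y))
     \<and> (\<forall>c. \<forall>x\<in>fst M. f (vscale c x) = vscale c (f x))
     \<and> (\<forall>x\<in>fst M. f (snd M x) = snd N (f x)))"

definition mdim :: "('i \<Rightarrow> 'a::field) set \<Rightarrow> nat" where
  "mdim V = (SOME n. has_dim V n)"
definition cbasis :: "('i, 'a::field) dmodule \<Rightarrow> nat \<Rightarrow> 'i \<Rightarrow> 'a" where
  "cbasis M = (SOME b. is_basis (fst M) (mdim (fst M)) b)"
definition cmat :: "('i, 'a::field) dmodule \<Rightarrow> nat \<Rightarrow> nat \<Rightarrow> 'a" where
  "cmat M = (SOME a. \<forall>j<mdim (fst M).
      snd M (cbasis M j) = lincomb (\<lambda>i. a i j) (cbasis M) (mdim (fst M)))"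

definition triv_mod :: "('a::field \<Rightarrow> 'a) \<Rightarrow> (unit, 'a) dmodule" where
  "triv_mod d = (UNIV, \<lambda>v u. d (v u))"

(* det M = \<Lambda>^n M, written in the basis b_0 \<and> ... \<and> b_(n-1):
   D(f e) = (d f + tr(a) f) e. *)
definition det_mod :: "('a::field \<Rightarrow> 'a) \<Rightarrow> ('i, 'a) dmodule \<Rightarrow> (unit, 'a) dmodule" where
  "det_mod d M = (UNIV, \<lambda>v u. d (v u) + (\<Sum>i<mdim (fst M). cmat M i i) * v u)"

(* sym^2 M, realised (char 0) as symmetric tensors \<Sum> S(i,j) b_i \<otimes> b_j,
   i.e. symmetric n x n matrices S, with D S = d S + a S + S a^T. *)
definition sym2_mod :: "('a::field \<Rightarrow> 'a) \<Rightarrow> ('i, 'a) dmodule \<Rightarrow> (nat \<times> nat, 'a) dmodule" where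
  "sym2_mod d M = (let n = mdim (fst M); a = cmat M in
     ({S. \<forall>i j. S (i, j) = S (j, i) \<and> (n \<le> i \<longrightarrow> S (i, j) = 0)},
      \<lambda>S (i, j). if i < n \<and> j < n then
          d (S (i, j)) + (\<Sum>k<n. a i k * S (k, j)) + (\<Sum>k<n. S (i, k) * a j k)
        else 0))"

end

theory Submission
  imports Defs "HOL-Library.Function_Algebras" HOL.Vector_Spaces
begin


section \<open>Derivations\<close>

context fixes d :: "'a::field_char_0 \<Rightarrow> 'a" assumes D: "diff_field d"
begin

lemma dadd: "d (x + y) = d x + d y" using D by (simp add: diff_field_def)
lemma dmul: "d (x * y) = d x * y + x * d y" using D by (simp add: diff_field_def)
lemma d0: "d 0 = 0" using dmul[of 0 0] by simp
lemma d1: "d 1 = 0" using dmul[of 1 1] by simp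
lemma dneg: "d (- x) = - d x" using dadd[of x "-x"] d0 by (simp add: add_eq_0_iff)
lemma ddiff: "d (x - y) = d x - d y" using dadd[of x "-y"] dneg[of y] by simp
lemma dsum: "d (sum f A) = sum (\<lambda>i. d (f i)) A"
  by (induction A rule: infinite_finite_induct) (auto simp: d0 dadd)
lemma dofnat: "d (of_nat n) = 0"
  by (induction n) (auto simp: d0 d1 dadd)
lemma dnumeral: "d (numeral n) = 0"
  using dofnat[of "numeral n"] by simp
lemma dinv: "x \<noteq> 0 \<Longrightarrow> d (inverse x) = - d x / x ^ 2"
proof -
  assume x: "x \<noteq> 0"
  have "d (x * inverse x) = 0" using x d1 by simp
  hence "d x * inverse x + x * d (inverse x) = 0" by (simp add: dmul)
  thus ?thesis using x by (simp add: field_simps power2_eq_square) (metis add_eq_0_iff mult.commute)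
qed

lemmas dsimps = dadd dmul d0 d1 dneg ddiff dsum dofnat dnumeral

end

section \<open>Matrices\<close>

type_synonym 'a mx = "nat \<Rightarrow> nat \<Rightarrow> 'a"

definition trunc :: "nat \<Rightarrow> 'a::zero mx \<Rightarrow> 'a mx" where
  "trunc n A = (\<lambda>i j. if i < n \<and> j < n then A i j else 0)"
definition mm :: "nat \<Rightarrow> 'a::comm_ring_1 mx \<Rightarrow> 'a mx \<Rightarrow> 'a mx" where
  "mm n A B = (\<lambda>i j. if i < n \<and> j < n then \<Sum>k<n. A i k * B k j else 0)"
definition tp :: "'a mx \<Rightarrow> 'a mx" where "tp A = (\<lambda>i j. A j i)"
definition dm :: "('a::zero \<Rightarrow> 'a) \<Rightarrow> nat \<Rightarrow> 'a mx \<Rightarrow> 'a mx" where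
  "dm d n A = (\<lambda>i j. if i < n \<and> j < n then d (A i j) else 0)"
definition idm :: "nat \<Rightarrow> 'a::{zero,one} mx" where
  "idm n = (\<lambda>i j. if i < n \<and> j < n \<and> i = j then 1 else 0)"
definition Dop :: "('a::comm_ring_1 \<Rightarrow> 'a) \<Rightarrow> nat \<Rightarrow> 'a mx \<Rightarrow> 'a mx \<Rightarrow> 'a mx" where
  "Dop d n a S = dm d n S + mm n a S + mm n S (tp a)"

lemma mm_assoc: "mm n (mm n A B) C = mm n A (mm n B C)"
proof -
  have "\<And>i j. (\<Sum>k<n. (\<Sum>l<n. A i l * B l k) * C k j) = (\<Sum>l<n. A i l * (\<Sum>k<n. B l k * C k j))"
    by (simp add: sum_distrib_left sum_distrib_right mult.assoc) (rule sum.swap)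
  thus ?thesis by (auto simp: mm_def fun_eq_iff intro!: sum.cong)
qed

lemma mm_trunc_l[simp]: "mm n (trunc n A) B = mm n A B"
  by (auto simp: mm_def trunc_def fun_eq_iff intro!: sum.cong)
lemma mm_trunc_r[simp]: "mm n A (trunc n B) = mm n A B"
  by (auto simp: mm_def trunc_def fun_eq_iff intro!: sum.cong)
lemma trunc_mm[simp]: "trunc n (mm n A B) = mm n A B"
  by (auto simp: mm_def trunc_def fun_eq_iff)
lemma trunc_dm[simp]: "trunc n (dm d n A) = dm d n A"
  by (auto simp: dm_def trunc_def fun_eq_iff)
lemma if01_mult_l: "(if P then 1 else 0) * (x::'a::comm_ring_1) = (if P then x else 0)" by simp
lemma if01_mult_r: "x * (if P then 1 else 0) = (if P then (x::'a::comm_ring_1) else 0)" by simp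
lemma mm_idm_l[simp]: "mm n (idm n) A = trunc n A"
  unfolding mm_def idm_def trunc_def fun_eq_iff if01_mult_l by (auto simp: if_distrib)
lemma mm_idm_r[simp]: "mm n A (idm n) = trunc n A"
  unfolding mm_def idm_def trunc_def fun_eq_iff if01_mult_r by (auto simp: if_distrib)
lemma mm_add_l: "mm n (A + B) C = mm n A C + mm n B C"
  by (auto simp: mm_def fun_eq_iff distrib_right sum.distrib)
lemma mm_add_r: "mm n A (B + C) = mm n A B + mm n A C"
  by (auto simp: mm_def fun_eq_iff distrib_left sum.distrib)
lemma mm_diff_l: "mm n (A - B) C = mm n A C - mm n B C"
  by (auto simp: mm_def fun_eq_iff left_diff_distrib sum_subtractf)
lemma mm_diff_r: "mm n A (B - C) = mm n A B - mm n A C"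
  by (auto simp: mm_def fun_eq_iff right_diff_distrib sum_subtractf)
lemma mm_neg_l: "mm n (- A) C = - mm n A C"
  by (auto simp: mm_def fun_eq_iff sum_negf)
lemma mm_neg_r: "mm n A (- C) = - mm n A C"
  by (auto simp: mm_def fun_eq_iff sum_negf)
lemma mm_zero_l[simp]: "mm n 0 C = 0" by (auto simp: mm_def fun_eq_iff)
lemma mm_zero_r[simp]: "mm n C 0 = 0" by (auto simp: mm_def fun_eq_iff)
lemma tp_mm: "tp (mm n A B) = mm n (tp B) (tp A)"
  by (auto simp: mm_def tp_def fun_eq_iff mult.commute)
lemma tp_tp[simp]: "tp (tp A) = A" by (simp add: tp_def)
lemma tp_add: "tp (A + B) = tp A + tp B" by (simp add: tp_def fun_eq_iff)
lemma tp_diff: "tp (A - B) = tp A - tp B" by (simp add: tp_def fun_eq_iff)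
lemma tp_neg: "tp (- A) = - tp A" by (simp add: tp_def fun_eq_iff)
lemma tp_dm: "tp (dm d n A) = dm d n (tp A)" by (auto simp: tp_def dm_def fun_eq_iff)
lemma tp_trunc: "tp (trunc n A) = trunc n (tp A)" by (auto simp: tp_def trunc_def fun_eq_iff)

lemmas mm_simps = mm_add_l mm_add_r mm_diff_l mm_diff_r mm_neg_l mm_neg_r mm_assoc tp_mm tp_add tp_diff tp_neg

context fixes d :: "'a::field_char_0 \<Rightarrow> 'a" assumes D: "diff_field d"
begin

lemma dm_mm: "dm d n (mm n A B) = mm n (dm d n A) B + mm n A (dm d n B)"
  by (auto simp: dm_def mm_def fun_eq_iff dsimps[OF D] sum.distrib intro!: sum.cong)
lemma dm_add: "dm d n (A + B) = dm d n A + dm d n B"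
  by (auto simp: dm_def fun_eq_iff dsimps[OF D])
lemma dm_diff: "dm d n (A - B) = dm d n A - dm d n B"
  by (auto simp: dm_def fun_eq_iff dsimps[OF D])
lemma dm_idm: "dm d n (idm n) = 0"
  by (auto simp: dm_def idm_def fun_eq_iff dsimps[OF D])
lemma dm_trunc[simp]: "dm d n (trunc n A) = dm d n A"
  by (auto simp: dm_def trunc_def fun_eq_iff)

lemma transport:
  assumes "mm n Q a = mm n a' Q + dm d n Q"
  shows "Dop d n a' (mm n (mm n Q S) (tp Q)) = mm n (mm n Q (Dop d n a S)) (tp Q)"
proof -
  have dQ: "dm d n Q = mm n Q a - mm n a' Q" using assms by simp
  have dQt: "dm d n (tp Q) = mm n (tp a) (tp Q) - mm n (tp Q) (tp a')"
    using arg_cong[OF dQ, of tp] by (simp add: tp_dm tp_mm tp_diff)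
  show ?thesis
    unfolding Dop_def
    by (simp add: dm_mm dQ dQt mm_simps algebra_simps)
qed

lemma inv_rel:
  assumes PQ: "mm n P Q = idm n" and QP: "mm n Q P = idm n"
    and rel: "mm n P a' = mm n a P + dm d n P"
  shows "mm n Q a = mm n a' Q + dm d n Q"
proof -
  have "dm d n (mm n P Q) = 0" using PQ dm_idm by simp
  hence z: "mm n (dm d n P) Q + mm n P (dm d n Q) = 0" by (simp add: dm_mm)
  have "mm n a' Q = mm n (mm n (mm n Q P) a') Q" using QP by simp
  also have "\<dots> = mm n Q (mm n (mm n P a') Q)" by (simp add: mm_assoc)
  also have "\<dots> = mm n Q (mm n a (mm n P Q)) + mm n Q (mm n (dm d n P) Q)"
    by (simp add: rel mm_simps)
  also have "mm n (dm d n P) Q = - mm n P (dm d n Q)" using z by (simp add: eq_neg_iff_add_eq_0)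
  also have "mm n Q (- mm n P (dm d n Q)) = - dm d n Q"
    by (simp add: mm_neg_r flip: mm_assoc add: QP)
  finally have "mm n a' Q = mm n Q (mm n a (mm n P Q)) + - dm d n Q" .
  hence "mm n a' Q = mm n Q a - dm d n Q" using PQ by (simp add: mm_assoc)
  thus ?thesis by (metis diff_add_cancel)
qed

end



lemma sum3: "(\<Sum>k<3. f k) = f 0 + f 1 + f (2::nat)"
  by (simp add: numeral_3_eq_3 lessThan_Suc numeral_2_eq_2 add_ac)
lemma sum2: "(\<Sum>k<2. f k) = f 0 + f (1::nat)"
  by (simp add: numeral_2_eq_2 lessThan_Suc add.commute)

definition det3 :: "'a::comm_ring_1 mx \<Rightarrow> 'a" where
  "det3 A = A 0 0 * A 1 1 * A 2 2 + A 0 1 * A 1 2 * A 2 0 + A 0 2 * A 1 0 * A 2 1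
          - A 0 2 * A 1 1 * A 2 0 - A 0 1 * A 1 0 * A 2 2 - A 0 0 * A 1 2 * A 2 1"

definition adj3 :: "'a::comm_ring_1 mx \<Rightarrow> 'a mx" where
  "adj3 A = trunc 3 (\<lambda>i j.
     if i = 0 \<and> j = 0 then A 1 1 * A 2 2 - A 1 2 * A 2 1
     else if i = 0 \<and> j = 1 then A 0 2 * A 2 1 - A 0 1 * A 2 2
     else if i = 0 \<and> j = 2 then A 0 1 * A 1 2 - A 0 2 * A 1 1
     else if i = 1 \<and> j = 0 then A 1 2 * A 2 0 - A 1 0 * A 2 2
     else if i = 1 \<and> j = 1 then A 0 0 * A 2 2 - A 0 2 * A 2 0
     else if i = 1 \<and> j = 2 then A 0 2 * A 1 0 - A 0 0 * A 1 2
     else if i = 2 \<and> j = 0 then A 1 0 * A 2 1 - A 1 1 * A 2 0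
     else if i = 2 \<and> j = 1 then A 0 1 * A 2 0 - A 0 0 * A 2 1
     else A 0 0 * A 1 1 - A 0 1 * A 1 0)"

definition smx :: "'a::comm_ring_1 \<Rightarrow> 'a mx \<Rightarrow> 'a mx" where "smx c A = (\<lambda>i j. c * A i j)"

lemma less3_cases: "i < (3::nat) \<Longrightarrow> i = 0 \<or> i = 1 \<or> i = 2" by auto
lemma less2_cases: "i < (2::nat) \<Longrightarrow> i = 0 \<or> i = 1" by auto

lemma mm3_eq: "mm 3 A B i j = (if i < 3 \<and> j < 3 then A i 0 * B 0 j + A i 1 * B 1 j + A i 2 * B 2 j else 0)"
  by (simp add: mm_def sum3)
lemma mm2_eq: "mm 2 A B i j = (if i < 2 \<and> j < 2 then A i 0 * B 0 j + A i 1 * B 1 j else 0)"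
  by (simp add: mm_def sum2)

lemma det3_mm: "det3 (mm 3 A B) = det3 A * det3 B"
  unfolding det3_def mm3_eq by (simp add: algebra_simps)


lemma det3_idm[simp]: "det3 (idm 3) = 1" by (simp add: det3_def idm_def)
lemma det3_tp: "det3 (tp A) = det3 A" by (simp add: det3_def tp_def algebra_simps)

lemma mm_smx_l: "mm n (smx c A) B = smx c (mm n A B)"
  by (auto simp: mm_def smx_def fun_eq_iff sum_distrib_left mult.assoc)
lemma mm_smx_r: "mm n A (smx c B) = smx c (mm n A B)"
  by (auto simp: mm_def smx_def fun_eq_iff sum_distrib_left mult.left_commute)
lemma smx_smx: "smx c (smx e A) = smx (c * e) A" by (simp add: smx_def mult.assoc fun_eq_iff)
lemma smx_one[simp]: "smx 1 A = A" by (simp add: smx_def fun_eq_iff)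

lemma cases33:
  assumes "i < (3::nat)" "j < (3::nat)"
  obtains "i=0" "j=0" | "i=0" "j=1" | "i=0" "j=2" | "i=1" "j=0" | "i=1" "j=1" | "i=1" "j=2"
        | "i=2" "j=0" | "i=2" "j=1" | "i=2" "j=2"
  using assms by (metis less3_cases)

lemma adj3_mm: "mm 3 (adj3 A) A = smx (det3 A) (idm 3)"
proof (intro ext)
  fix i j show "mm 3 (adj3 A) A i j = smx (det3 A) (idm 3) i j"
  proof (cases "i < 3 \<and> j < 3")
    case True
    hence "i < 3" "j < 3" by auto
    thus ?thesis by (cases rule: cases33)
      (simp_all add: mm3_eq adj3_def trunc_def smx_def idm_def det3_def algebra_simps)
  qed (auto simp: mm3_eq smx_def idm_def)
qed

lemma trunc_adj3[simp]: "trunc 3 (adj3 A) = adj3 A"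
  by (auto simp: adj3_def trunc_def fun_eq_iff)

lemma lr_inv3:
  fixes A B :: "'a::field mx"
  assumes AB: "mm 3 A B = idm 3"
  shows "mm 3 B A = idm 3" and "det3 A \<noteq> 0"
proof -
  have dd: "det3 A * det3 B = 1" using det3_mm[of A B] AB by simp
  thus nz: "det3 A \<noteq> 0" by auto
  have "adj3 A = mm 3 (adj3 A) (mm 3 A B)" using AB by simp
  also have "\<dots> = smx (det3 A) (trunc 3 B)" by (simp flip: mm_assoc add: adj3_mm mm_smx_l)
  finally have tB: "trunc 3 B = smx (inverse (det3 A)) (adj3 A)"
    using nz by (simp add: smx_smx)
  have "mm 3 B A = mm 3 (trunc 3 B) A" by simp
  also have "\<dots> = idm 3" unfolding tB using nz by (simp add: mm_smx_l adj3_mm smx_smx)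
  finally show "mm 3 B A = idm 3" .
qed

definition det2 :: "'a::comm_ring_1 mx \<Rightarrow> 'a" where
  "det2 A = A 0 0 * A 1 1 - A 0 1 * A 1 0"

definition inv2 :: "'a::field mx \<Rightarrow> 'a mx" where
  "inv2 A = trunc 2 (\<lambda>i j. inverse (det2 A) *
     (if i = 0 \<and> j = 0 then A 1 1 else if i = 1 \<and> j = 1 then A 0 0
      else if i = 0 then - A 0 1 else - A 1 0))"

lemma inv2:
  fixes A :: "'a::field mx"
  assumes "det2 A \<noteq> 0"
  shows "mm 2 A (inv2 A) = idm 2" "mm 2 (inv2 A) A = idm 2"
proof -
  have h: "inverse (det2 A) * (A 0 0 * A 1 1 - A 0 1 * A 1 0) = 1" using assms by (simp add: det2_def)
  have e: "\<And>i j. inv2 A i j = (if i < 2 \<and> j < 2 then inverse (det2 A) *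
     (if i = 0 \<and> j = 0 then A 1 1 else if i = 1 \<and> j = 1 then A 0 0
      else if i = 0 then - A 0 1 else - A 1 0) else 0)" by (simp add: inv2_def trunc_def)
  show "mm 2 A (inv2 A) = idm 2"
  proof (intro ext)
    fix i j show "mm 2 A (inv2 A) i j = idm 2 i j"
    proof (cases "i < 2 \<and> j < 2")
      case True
      then consider "i=0" "j=0" | "i=0" "j=1" | "i=1" "j=0" | "i=1" "j=1" by fastforce
      thus ?thesis unfolding mm2_eq idm_def e using h by cases (simp_all add: algebra_simps)
    qed (auto simp: mm2_eq idm_def)
  qed
  show "mm 2 (inv2 A) A = idm 2"
  proof (intro ext)
    fix i j show "mm 2 (inv2 A) A i j = idm 2 i j"
    proof (cases "i < 2 \<and> j < 2")
      case True
      then consider "i=0" "j=0" | "i=0" "j=1" | "i=1" "j=0" | "i=1" "j=1" by fastforce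
      thus ?thesis unfolding mm2_eq idm_def e using h by cases (simp_all add: algebra_simps)
    qed (auto simp: mm2_eq idm_def)
  qed
qed



section \<open>Vectors, bases, dimension\<close>

lemma vadd_eq: "vadd u v = u + v" by (simp add: vadd_def fun_eq_iff)
lemma vzero_eq: "vzero = 0" by (simp add: vzero_def fun_eq_iff)

lemma sum_app: "(sum f A) x = sum (\<lambda>a. f a x) A"
  by (induction A rule: infinite_finite_induct) auto

lemma lincomb_sum: "lincomb c b n = (\<Sum>k<n. vscale (c k) (b k))"
  by (simp add: lincomb_def vscale_def fun_eq_iff sum_app)

lemma lincomb_cong: "(\<And>k. k < n \<Longrightarrow> c k = e k) \<Longrightarrow> lincomb c b n = lincomb e b n"
  by (simp add: lincomb_def)
lemma lincomb_add: "lincomb (\<lambda>k. c k + e k) b n = vadd (lincomb c b n) (lincomb e b n)"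
  by (simp add: lincomb_def vadd_def distrib_right sum.distrib)
lemma lincomb_diff: "lincomb (\<lambda>k. c k - e k) b n = lincomb c b n - lincomb e b n"
  by (simp add: lincomb_def fun_eq_iff left_diff_distrib sum_subtractf)
lemma lincomb_scale: "lincomb (\<lambda>k. s * c k) b n = vscale s (lincomb c b n)"
  by (simp add: lincomb_def vscale_def sum_distrib_left mult.assoc)
lemma lincomb_zero: "lincomb (\<lambda>_. 0) b n = vzero"
  by (simp add: lincomb_def vzero_def)
lemma lincomb_delta: "k < n \<Longrightarrow> lincomb (\<lambda>i. if i = k then 1 else 0) b n = b k"
  unfolding lincomb_def if01_mult_l by (simp add: if_distrib cong: if_cong)

context fixes V :: "('i \<Rightarrow> 'a::field) set" and n b assumes B: "is_basis V n b"
begin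

lemma lincomb_in: "lincomb c b n \<in> V" using B by (auto simp: is_basis_def)
lemma basis_in: "k < n \<Longrightarrow> b k \<in> V" using lincomb_in[of "\<lambda>i. if i = k then 1 else 0"]
  by (simp add: lincomb_delta)
lemma in_lincomb: "x \<in> V \<Longrightarrow> \<exists>c. x = lincomb c b n" using B by (auto simp: is_basis_def)
lemma lincomb_eq0: "lincomb c b n = 0 \<Longrightarrow> k < n \<Longrightarrow> c k = 0"
  using B by (auto simp: is_basis_def vzero_eq)
lemma lincomb_inj: "lincomb c b n = lincomb e b n \<Longrightarrow> k < n \<Longrightarrow> c k = e k"
  using lincomb_eq0[of "\<lambda>k. c k - e k" k] by (simp add: lincomb_diff)

definition crd :: "('i \<Rightarrow> 'a) \<Rightarrow> nat \<Rightarrow> 'a" where "crd x = (SOME c. x = lincomb c b n)"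
lemma crd: "x \<in> V \<Longrightarrow> x = lincomb (crd x) b n"
  unfolding crd_def using in_lincomb by (metis (mono_tags, lifting) someI_ex)
lemma crd_lincomb: "k < n \<Longrightarrow> crd (lincomb c b n) k = c k"
  using crd[OF lincomb_in[of c]] lincomb_inj by metis

lemma basis_inj: "inj_on b {..<n}"
proof (rule inj_onI)
  fix i j assume ij: "i \<in> {..<n}" "j \<in> {..<n}" "b i = b j"
  show "i = j"
  proof (rule ccontr)
    assume ne: "i \<noteq> j"
    have "lincomb (\<lambda>k. (if k = i then 1 else 0) - (if k = j then 1 else 0)) b n = 0"
      using ij by (simp add: lincomb_diff lincomb_delta)
    from lincomb_eq0[OF this, of i] ij ne show False by simp
  qed
qed

end

lemma vs: "vector_space (vscale :: 'a::field \<Rightarrow> ('i \<Rightarrow> 'a) \<Rightarrow> 'i \<Rightarrow> 'a)"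
  by unfold_locales (auto simp: vscale_def fun_eq_iff algebra_simps plus_fun_def)

lemma ms: "module (vscale :: 'a::field \<Rightarrow> ('i \<Rightarrow> 'a) \<Rightarrow> 'i \<Rightarrow> 'a)"
  using vs module_iff_vector_space by blast

lemma basis_dim:
  fixes V :: "('i \<Rightarrow> 'a::field) set"
  assumes B: "is_basis V n b"
  shows "vector_space.dim vscale V = n"
proof (rule vector_space.dim_unique[OF vs, of "b ` {..<n}"])
  show "b ` {..<n} \<subseteq> V" using basis_in[OF B] by auto
  show "card (b ` {..<n}) = n" using basis_inj[OF B] by (simp add: card_image)
  show "V \<subseteq> module.span vscale (b ` {..<n})"
  proof
    fix x assume "x \<in> V"
    then obtain c where x: "x = lincomb c b n" using in_lincomb[OF B] by blast
    show "x \<in> module.span vscale (b ` {..<n})" unfolding x lincomb_sum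
      by (intro module.span_sum[OF ms] module.span_scale[OF ms]
          module.span_base[OF ms]) auto
  qed
  show "\<not> module.dependent vscale (b ` {..<n})"
    unfolding module.independent_explicit_module[OF ms]
  proof (intro allI impI)
    fix t u v assume t: "finite t" "t \<subseteq> b ` {..<n}" "(\<Sum>v\<in>t. vscale (u v) v) = 0" "v \<in> t"
    define c where "c k = (if b k \<in> t then u (b k) else 0)" for k
    have "lincomb c b n = (\<Sum>k<n. vscale (c k) (b k))" by (rule lincomb_sum)
    also have "\<dots> = (\<Sum>k\<in>{k. k < n \<and> b k \<in> t}. vscale (u (b k)) (b k))"
      by (rule sum.mono_neutral_cong_right) (auto simp: c_def vscale_def fun_eq_iff)
    also have "\<dots> = (\<Sum>v\<in>t. vscale (u v) v)"
    proof (rule sym, rule sum.reindex_cong[of b])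
      show "inj_on b {k. k < n \<and> b k \<in> t}" using basis_inj[OF B] by (rule inj_on_subset) auto
      show "t = b ` {k. k < n \<and> b k \<in> t}" using t(2) by auto
    qed auto
    finally have "lincomb c b n = 0" using t(3) by simp
    moreover obtain k where "k < n" "v = b k" using t by auto
    ultimately show "u v = 0" using lincomb_eq0[OF B, of c k] t(4) by (simp add: c_def)
  qed
qed

lemma has_dim_unique: "has_dim V n \<Longrightarrow> has_dim V m \<Longrightarrow> n = m"
  unfolding has_dim_def using basis_dim by metis

lemma mdim_eq: "has_dim V n \<Longrightarrow> mdim V = n"
  unfolding mdim_def using has_dim_unique by (metis someI_ex)

lemma cbasis: "has_dim (fst M) n \<Longrightarrow> is_basis (fst M) n (cbasis M)"
  using mdim_eq[of "fst M" n] unfolding cbasis_def has_dim_def by (metis someI_ex)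

lemma lincomb_Suc: "lincomb c b (Suc m) = vadd (lincomb c b m) (vscale (c m) (b m))"
  by (simp add: lincomb_def vadd_def vscale_def)

lemma lincomb_trunc: "m \<le> n \<Longrightarrow> lincomb c b m = lincomb (\<lambda>k. if k < m then c k else 0) b n"
  unfolding lincomb_def by (auto simp: fun_eq_iff split: if_splits intro!: sum.mono_neutral_cong_left)

lemma swap_aux: "(\<Sum>k<n. c k * (\<Sum>i<n. a i k * e i)) = (\<Sum>i<n. (\<Sum>j<n. a i j * c j) * (e i::'a::comm_ring_1))"
proof -
  have "(\<Sum>k<n. c k * (\<Sum>i<n. a i k * e i)) = (\<Sum>k<n. \<Sum>i<n. a i k * c k * e i)"
    by (simp add: sum_distrib_left mult_ac)
  also have "\<dots> = (\<Sum>i<n. \<Sum>k<n. a i k * c k * e i)" by (rule sum.swap)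
  also have "\<dots> = (\<Sum>i<n. (\<Sum>j<n. a i j * c j) * e i)" by (simp add: sum_distrib_right)
  finally show ?thesis .
qed

context fixes d :: "'a::field_char_0 \<Rightarrow> 'a" and V D and n b
  assumes DM: "dmod d (V, D)" and B: "is_basis V n b"
begin

lemma D_in: "x \<in> V \<Longrightarrow> D x \<in> V" using DM by (simp add: dmod_def)
lemma D_add: "x \<in> V \<Longrightarrow> y \<in> V \<Longrightarrow> D (vadd x y) = vadd (D x) (D y)" using DM by (simp add: dmod_def)
lemma D_scale: "x \<in> V \<Longrightarrow> D (vscale c x) = vadd (vscale (d c) x) (vscale c (D x))"
  using DM by (simp add: dmod_def)

lemma D_lincomb_aux: "m \<le> n \<Longrightarrow> D (lincomb c b m) = (\<lambda>x. \<Sum>k<m. d (c k) * b k x + c k * D (b k) x)"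
proof (induction m)
  case 0
  have "vzero \<in> V" using lincomb_in[OF B, of "\<lambda>_. 0"] by (simp add: lincomb_zero)
  hence "D vzero = vadd (D vzero) (D vzero)" using D_add[of vzero vzero] by (simp add: vadd_def vzero_def)
  hence "D vzero = vzero" by (simp add: vadd_def vzero_def fun_eq_iff)
  thus ?case by (simp add: lincomb_def vzero_def)
next
  case (Suc m)
  have in1: "lincomb c b m \<in> V" using lincomb_trunc[of m n c b] Suc lincomb_in[OF B] by simp
  have "vscale (c m) (b m) = lincomb (\<lambda>k. c m * (if k = m then 1 else 0)) b n"
    using Suc.prems by (simp only: lincomb_scale lincomb_delta[of m n])
  hence in2: "vscale (c m) (b m) \<in> V" using lincomb_in[OF B] by simp
  have mn: "m < n" using Suc.prems by simp
    show ?case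
    unfolding lincomb_Suc D_add[OF in1 in2] D_scale[OF basis_in[OF B mn]] using Suc
    by (simp add: vadd_def vscale_def)
qed

lemma D_lincomb:
  assumes a: "\<And>j. j < n \<Longrightarrow> D (b j) = lincomb (\<lambda>i. a i j) b n"
  shows "D (lincomb c b n) = lincomb (\<lambda>i. d (c i) + (\<Sum>j<n. a i j * c j)) b n"
proof -
  have "D (lincomb c b n) = (\<lambda>x. \<Sum>k<n. d (c k) * b k x + c k * D (b k) x)" by (rule D_lincomb_aux) simp
  also have "\<dots> = (\<lambda>x. \<Sum>k<n. d (c k) * b k x + c k * (\<Sum>i<n. a i k * b i x))"
    using a by (simp add: lincomb_def)
  also have "\<dots> = lincomb (\<lambda>i. d (c i) + (\<Sum>j<n. a i j * c j)) b n"
    unfolding lincomb_def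
    by (simp add: fun_eq_iff sum.distrib distrib_right swap_aux)
  finally show ?thesis .
qed

end

lemma cmat:
  fixes d :: "'a::field_char_0 \<Rightarrow> 'a"
  assumes DM: "dmod d M" and H: "has_dim (fst M) n"
  shows "\<And>j. j < n \<Longrightarrow> snd M (cbasis M j) = lincomb (\<lambda>i. cmat M i j) (cbasis M) n"
proof -
  have md: "mdim (fst M) = n" using H by (rule mdim_eq)
  have B: "is_basis (fst M) n (cbasis M)" using H by (rule cbasis)
  have ex: "\<exists>a. \<forall>j<n. snd M (cbasis M j) = lincomb (\<lambda>i. a i j) (cbasis M) n"
  proof
    show "\<forall>j<n. snd M (cbasis M j) = lincomb (\<lambda>i. crd n (cbasis M) (snd M (cbasis M j)) i) (cbasis M) n"
      using crd[OF B] DM basis_in[OF B] by (simp add: dmod_def)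
  qed
  fix j assume "j < n"
  thus "snd M (cbasis M j) = lincomb (\<lambda>i. cmat M i j) (cbasis M) n"
    using someI_ex[OF ex] unfolding cmat_def md by blast
qed

lemma det_iso_g:
  fixes d :: "'a::field_char_0 \<Rightarrow> 'a"
  assumes D: "diff_field d" and I: "dmod_iso (det_mod d M) (triv_mod d)"
  shows "\<exists>g. g \<noteq> 0 \<and> d g = (\<Sum>i<mdim (fst M). cmat M i i) * g"
proof -
  let ?t = "\<Sum>i<mdim (fst M). cmat M i i"
  obtain f where bij0: "bij_betw f (fst (det_mod d M)) (fst (triv_mod d))"
    and sc0: "\<forall>c. \<forall>x\<in>fst (det_mod d M). f (vscale c x) = vscale c (f x)"
    and Dc1: "\<forall>x\<in>fst (det_mod d M). f (snd (det_mod d M) x) = snd (triv_mod d) (f x)"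
    using I unfolding dmod_iso_def by blast
  have U: "fst (det_mod d M) = UNIV" "fst (triv_mod d) = UNIV" by (simp_all add: det_mod_def triv_mod_def)
  have bij: "bij_betw f UNIV UNIV" using bij0 U by simp
  have sc: "\<And>c x. f (vscale c x) = vscale c (f x)" using sc0 U by simp
  have Dc0: "\<And>x. f (snd (det_mod d M) x) = snd (triv_mod d) (f x)" using Dc1 U by simp
  have Dc: "\<And>x. f (\<lambda>u. d (x u) + ?t * x u) = (\<lambda>u. d (f x u))"
    using Dc0 by (simp add: det_mod_def triv_mod_def)
  define e :: "unit \<Rightarrow> 'a" where "e = (\<lambda>_. 1)"
  have "(\<lambda>u. d (e u) + ?t * e u) = vscale ?t e" by (simp add: e_def d1[OF D] vscale_def)
  hence "vscale ?t (f e) = (\<lambda>u. d (f e u))" using Dc[of e] sc by simp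
  hence g: "d (f e ()) = ?t * f e ()" by (simp add: vscale_def fun_eq_iff)
  have "f e () \<noteq> 0"
  proof
    assume z: "f e () = 0"
    have "\<And>x. f x = (\<lambda>_. 0)"
    proof -
      fix x :: "unit \<Rightarrow> 'a"
      have "x = vscale (x ()) e" by (simp add: vscale_def e_def fun_eq_iff)
      hence "f x = f (vscale (x ()) e)" by (rule arg_cong)
      hence "f x = vscale (x ()) (f e)" using sc by simp
      thus "f x = (\<lambda>_. 0)" using z by (simp add: vscale_def fun_eq_iff)
    qed
    moreover have "e \<in> f ` UNIV" using bij by (simp add: bij_betw_def)
    then obtain y where "f y = e" by blast
    ultimately have "e = (\<lambda>_. 0)" by simp
    thus False unfolding e_def by (simp add: fun_eq_iff)
  qed
  with g show ?thesis by blast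
qed

lemma det_iso_of_g:
  fixes d :: "'a::field_char_0 \<Rightarrow> 'a"
  assumes D: "diff_field d" and g: "g \<noteq> 0" "d g = (\<Sum>i<mdim (fst M). cmat M i i) * g"
  shows "dmod_iso (det_mod d M) (triv_mod d)"
proof -
  let ?t = "\<Sum>i<mdim (fst M). cmat M i i"
  have U: "fst (det_mod d M) = UNIV" "fst (triv_mod d) = UNIV" by (simp_all add: det_mod_def triv_mod_def)
  have b: "bij_betw (vscale g) (UNIV :: (unit \<Rightarrow> 'a) set) UNIV"
    using g(1) by (intro bij_betw_byWitness[where f'="vscale (inverse g)"]) (auto simp: vscale_def fun_eq_iff)
  have "\<And>x. vscale g (snd (det_mod d M) x) = snd (triv_mod d) (vscale g x)"
    by (simp add: det_mod_def triv_mod_def vscale_def fun_eq_iff dmul[OF D] g(2) algebra_simps)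
  moreover have "\<And>x y. vscale g (vadd x y) = vadd (vscale g x) (vscale g y)"
    by (simp add: vscale_def vadd_def fun_eq_iff algebra_simps)
  moreover have "\<And>c x. vscale g (vscale c x) = vscale c (vscale g x)"
    by (simp add: vscale_def fun_eq_iff algebra_simps)
  ultimately show ?thesis unfolding dmod_iso_def U using b by blast
qed

lemma jacobi3:
  fixes d :: "'a::field_char_0 \<Rightarrow> 'a"
  assumes D: "diff_field d" and H: "Dop d 3 a S = 0"
  shows "d (det3 S) = - 2 * (a 0 0 + a 1 1 + a 2 2) * det3 S"
proof -
  have e: "\<And>i j. i < 3 \<Longrightarrow> j < 3 \<Longrightarrow> d (S i j) = - (a i 0 * S 0 j + a i 1 * S 1 j + a i 2 * S 2 j)
     - (S i 0 * a j 0 + S i 1 * a j 1 + S i 2 * a j 2)"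
  proof -
    fix i j :: nat assume "i < 3" "j < 3"
    from fun_cong[OF fun_cong[OF H, of i], of j] this
    have "d (S i j) + ((a i 0 * S 0 j + a i 1 * S 1 j + a i 2 * S 2 j)
     + (S i 0 * a j 0 + S i 1 * a j 1 + S i 2 * a j 2)) = 0"
      by (simp add: Dop_def dm_def mm3_eq tp_def add.assoc)
    hence "d (S i j) = - ((a i 0 * S 0 j + a i 1 * S 1 j + a i 2 * S 2 j)
     + (S i 0 * a j 0 + S i 1 * a j 1 + S i 2 * a j 2))" by (simp only: eq_neg_iff_add_eq_0)
    thus "?thesis i j" by simp
  qed
  show ?thesis
    unfolding det3_def
    by (simp add: dsimps[OF D] e algebra_simps)
qed

definition dot3 :: "(nat \<Rightarrow> 'a::comm_ring_1) \<Rightarrow> (nat \<Rightarrow> 'a) \<Rightarrow> 'a" where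
  "dot3 x y = x 0 * y 0 + x 1 * y 1 + x 2 * y 2"
definition mv3 :: "'a::comm_ring_1 mx \<Rightarrow> (nat \<Rightarrow> 'a) \<Rightarrow> nat \<Rightarrow> 'a" where
  "mv3 S x = (\<lambda>i. S i 0 * x 0 + S i 1 * x 1 + S i 2 * x 2)"
definition cross3 :: "(nat \<Rightarrow> 'a::comm_ring_1) \<Rightarrow> (nat \<Rightarrow> 'a) \<Rightarrow> nat \<Rightarrow> 'a" where
  "cross3 x y = (\<lambda>i. if i = 0 then x 1 * y 2 - x 2 * y 1 else if i = 1 then x 2 * y 0 - x 0 * y 2
                    else x 0 * y 1 - x 1 * y 0)"
definition rows3 :: "(nat \<Rightarrow> 'a::zero) \<Rightarrow> (nat \<Rightarrow> 'a) \<Rightarrow> (nat \<Rightarrow> 'a) \<Rightarrow> 'a mx" where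
  "rows3 x y z = (\<lambda>i j. if j < 3 then (if i = 0 then x j else if i = 1 then y j else if i = 2 then z j else 0) else 0)"

lemma lagrange3: "det3 (rows3 q (cross3 X Y) p) = dot3 X p * dot3 Y q - dot3 X q * dot3 Y p"
  by (simp add: det3_def rows3_def cross3_def dot3_def algebra_simps)

lemma cross3_orth: "dot3 (cross3 X Y) X = 0" "dot3 (cross3 X Y) Y = 0"
  by (simp_all add: cross3_def dot3_def algebra_simps)

lemma QSQ_entry: "i < 3 \<Longrightarrow> j < 3 \<Longrightarrow>
  mm 3 (mm 3 Q S) (tp Q) i j = dot3 (\<lambda>k. Q i k) (mv3 S (\<lambda>k. Q j k))"
  by (simp add: mm3_eq tp_def dot3_def mv3_def algebra_simps)

lemma rows3_row: "rows3 x y z 0 = (\<lambda>k. if k < 3 then x k else 0)"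
  "rows3 x y z 1 = (\<lambda>k. if k < 3 then y k else 0)" "rows3 x y z 2 = (\<lambda>k. if k < 3 then z k else 0)"
  by (auto simp: rows3_def fun_eq_iff)

lemma dot3_trunc: "dot3 (\<lambda>k. if k < 3 then x k else 0) y = dot3 x y"
  "dot3 y (\<lambda>k. if k < 3 then x k else 0) = dot3 y x"
  "mv3 S (\<lambda>k. if k < 3 then x k else 0) = mv3 S x"
  by (simp_all add: dot3_def mv3_def)

definition e2 :: "nat \<Rightarrow> nat \<Rightarrow> nat \<Rightarrow> nat" where
  "e2 i j = (\<lambda>k. (if k = i then 1 else 0) + (if k = j then 1 else 0))"

lemma finite_mon: "finite (monomials m r)"
proof (rule finite_subset)
  show "monomials m r \<subseteq> {f. \<forall>x. (x \<in> {..<m} \<longrightarrow> f x \<in> {..r}) \<and> (x \<notin> {..<m} \<longrightarrow> f x = 0)}"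
  proof
    fix f assume "f \<in> monomials m r"
    hence f: "\<And>i. m \<le> i \<Longrightarrow> f i = 0" "(\<Sum>i<m. f i) = r" by (auto simp: monomials_def)
    have "\<And>x. x < m \<Longrightarrow> f x \<le> r" unfolding f(2)[symmetric] by (intro member_le_sum) auto
    thus "f \<in> {f. \<forall>x. (x \<in> {..<m} \<longrightarrow> f x \<in> {..r}) \<and> (x \<notin> {..<m} \<longrightarrow> f x = 0)}"
      using f(1) by auto
  qed
qed (intro finite_set_of_finite_funs; simp)

lemma e2_mon: "i < 3 \<Longrightarrow> j < 3 \<Longrightarrow> e2 i j \<in> monomials 3 2"
  unfolding monomials_def mem_Collect_eq
proof (intro conjI allI impI)
  assume "i < 3" "j < 3"
  thus "(\<Sum>k<3. e2 i j k) = 2" by (cases rule: cases33) (simp_all add: sum3 e2_def)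
  fix k :: nat assume "3 \<le> k" thus "e2 i j k = 0" using \<open>i < 3\<close> \<open>j < 3\<close> by (simp add: e2_def)
qed

lemma prod3: "(\<Prod>k<3. f k) = f 0 * f 1 * f (2::nat)"
  by (simp add: numeral_3_eq_3 lessThan_Suc numeral_2_eq_2 mult_ac)

lemma e2_prod: assumes "i < 3" "j < 3" shows "(\<Prod>k<3. (x k::'a::comm_ring_1) ^ e2 i j k) = x i * x j"
  using assms by (cases rule: cases33) (simp_all add: prod3 e2_def power2_eq_square mult_ac)

lemma C1_iso:
  fixes S :: "'a::field mx"
  assumes C: "C1_field TYPE('a)"
  shows "\<exists>x. (\<exists>i<3. x i \<noteq> 0) \<and> dot3 x (mv3 S x) = 0"
proof -
  define c where "c \<alpha> = (\<Sum>i<3. \<Sum>j<3. if \<alpha> = e2 i j then S i j else 0)" for \<alpha>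
  obtain x where x: "\<exists>i<3. x i \<noteq> 0" "form_eval 3 2 c x = 0"
    using C[unfolded C1_field_def, rule_format, of 2 3 c] by auto
  have "form_eval 3 2 c x = (\<Sum>\<alpha>\<in>monomials 3 2. \<Sum>i<3. \<Sum>j<3. if \<alpha> = e2 i j then S i j * (\<Prod>k<3. x k ^ \<alpha> k) else 0)"
    unfolding form_eval_def c_def sum_distrib_right by (intro sum.cong refl) simp
  also have "\<dots> = (\<Sum>i<3. \<Sum>j<3. \<Sum>\<alpha>\<in>monomials 3 2. if e2 i j = \<alpha> then S i j * (\<Prod>k<3. x k ^ \<alpha> k) else 0)"
    by (subst sum.swap, subst (2) sum.swap) (simp add: eq_commute)
  also have "\<dots> = (\<Sum>i<3. \<Sum>j<3. S i j * (x i * x j))"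
    by (intro sum.cong refl) (simp add: finite_mon e2_mon e2_prod)
  also have "\<dots> = dot3 x (mv3 S x)" by (simp add: sum3 dot3_def mv3_def algebra_simps)
  finally show ?thesis using x by auto
qed

lemma dot3_comm: "dot3 x y = dot3 y x" by (simp add: dot3_def mult_ac)

lemma bf_sym: assumes "\<And>i j. S i j = S j i" shows "dot3 x (mv3 S y) = dot3 y (mv3 S x)"
proof -
  have "S 1 0 = S 0 1" "S 2 0 = S 0 2" "S 2 1 = S 1 2" using assms by auto
  thus ?thesis by (simp add: dot3_def mv3_def algebra_simps)
qed

lemma bf_lin_l: "dot3 (\<lambda>i. x i - c * y i) z = dot3 x z - c * dot3 y z"
  by (simp add: dot3_def algebra_simps)
lemma bf_lin_r: "mv3 S (\<lambda>i. x i - c * y i) = (\<lambda>i. mv3 S x i - c * mv3 S y i)"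
  by (simp add: mv3_def algebra_simps fun_eq_iff)
lemma bf_scale_l: "dot3 (\<lambda>i. c * x i) z = c * dot3 x z"
  by (simp add: dot3_def algebra_simps)
lemma bf_scale_r: "mv3 S (\<lambda>i. c * x i) = (\<lambda>i. c * mv3 S x i)"
  by (simp add: mv3_def algebra_simps fun_eq_iff)
lemma dot3_scale_r: "dot3 z (\<lambda>i. c * x i) = c * dot3 z x"
  by (simp add: dot3_def algebra_simps)
lemma dot3_diff_r: "dot3 z (\<lambda>i. x i - c * y i) = dot3 z x - c * dot3 z y"
  by (simp add: dot3_def algebra_simps)

lemma trunc_diff: "trunc n (A - B) = trunc n A - trunc n (B :: 'a::ab_group_add mx)"
  by (auto simp: trunc_def fun_eq_iff)

lemma core:
  fixes d :: "'a::field_char_0 \<Rightarrow> 'a" and a S T :: "'a mx"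
  assumes D: "diff_field d" and C: "C1_field TYPE('a)"
    and g: "g \<noteq> 0" "d g = (a 0 0 + a 1 1 + a 2 2) * g"
    and St: "trunc 3 S = S" and Ssym: "\<And>i j. S i j = S j i"
    and H: "Dop d 3 a S = 0" and ST: "mm 3 S T = idm 3"
  shows "\<exists>Q P A. mm 3 Q P = idm 3 \<and> mm 3 P Q = idm 3 \<and> mm 3 Q a = mm 3 A Q + dm d 3 Q
     \<and> A 0 2 = 0 \<and> A 1 1 = 0 \<and> A 2 0 = 0 \<and> A 1 2 = A 0 1 / 2 \<and> A 2 1 = 2 * A 1 0 \<and> A 2 2 = - A 0 0"
proof -
  let ?B = "\<lambda>x y. dot3 x (mv3 S y)"
  have dS: "det3 S \<noteq> 0" using lr_inv3(2)[OF ST] .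
  have S3: "S 1 0 = S 0 1" "S 2 0 = S 0 2" "S 2 1 = S 1 2" "S (Suc 0) 0 = S 0 (Suc 0)" "S 2 (Suc 0) = S (Suc 0) 2" using Ssym by auto
  have Bsym: "\<And>x y. ?B x y = ?B y x" by (rule bf_sym) (rule Ssym)
  obtain q where q: "\<exists>i<3. q i \<noteq> 0" "?B q q = 0" using C1_iso[OF C] by blast
  have e: "\<And>j l. j < 3 \<Longrightarrow> l < 3 \<Longrightarrow> S j 0 * T 0 l + S j 1 * T 1 l + S j 2 * T 2 l = (if j = l then 1 else 0)"
  proof -
    fix j l :: nat assume jl: "j < 3" "l < 3"
    have "mm 3 S T j l = idm 3 j l" using ST by simp
    thus "?thesis j l" using jl by (simp add: mm3_eq idm_def)
  qed
  have "\<exists>k<3. mv3 S q k \<noteq> 0"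
  proof (rule ccontr)
    assume "\<not> ?thesis"
    hence z: "mv3 S q 0 = 0" "mv3 S q 1 = 0" "mv3 S q 2 = 0" by auto
    have "\<And>l. l < 3 \<Longrightarrow> q l = mv3 S q 0 * T 0 l + mv3 S q 1 * T 1 l + mv3 S q 2 * T 2 l"
    proof -
      fix l :: nat assume l: "l < 3"
      have "q l = q 0 * (S 0 0 * T 0 l + S 0 1 * T 1 l + S 0 2 * T 2 l)
               + q 1 * (S 1 0 * T 0 l + S 1 1 * T 1 l + S 1 2 * T 2 l)
               + q 2 * (S 2 0 * T 0 l + S 2 1 * T 1 l + S 2 2 * T 2 l)"
        using l e[OF _ l] by (auto dest!: less3_cases)
      also have "\<dots> = mv3 S q 0 * T 0 l + mv3 S q 1 * T 1 l + mv3 S q 2 * T 2 l"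
        by (simp add: mv3_def S3 algebra_simps)
      finally show "q l = mv3 S q 0 * T 0 l + mv3 S q 1 * T 1 l + mv3 S q 2 * T 2 l" .
    qed
    hence "\<And>l. l < 3 \<Longrightarrow> q l = 0" using z by simp
    thus False using q(1) by auto
  qed
  then obtain k where k: "k < 3" "mv3 S q k \<noteq> 0" by blast
  define u where "u = (\<lambda>i. if i = k then inverse (mv3 S q k) else 0)"
  have uq: "dot3 u (mv3 S q) = 1" using k by (auto simp: u_def dot3_def dest!: less3_cases)
  define c0 where "c0 = ?B u u / 2"
  define p where "p = (\<lambda>i. u i - c0 * q i)"
  have qp: "?B q p = 1" unfolding p_def bf_lin_r dot3_diff_r
    using q(2) uq Bsym[of q u] by simp
  have pp: "?B p p = 0" unfolding p_def bf_lin_r dot3_diff_r bf_lin_l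
    using q(2) uq Bsym[of q u] by (simp add: c0_def)
  have pq: "?B p q = 1" using qp Bsym[of p q] by simp
  define r where "r = cross3 (mv3 S q) (mv3 S p)"
  have rq: "?B r q = 0" "?B r p = 0" unfolding r_def by (simp_all add: cross3_orth)
  have qr: "?B q r = 0" "?B p r = 0" using rq Bsym by metis+
  define Q0 where "Q0 = rows3 q r p"
  have dQ0: "det3 Q0 = 1" unfolding Q0_def r_def lagrange3
    using qp pq q(2) pp by (simp add: dot3_comm)
  define c where "c = ?B r r"
  have E0: "\<And>i j. i < 3 \<Longrightarrow> j < 3 \<Longrightarrow> mm 3 (mm 3 Q0 S) (tp Q0) i j = ?B (Q0 i) (Q0 j)"
    by (simp add: QSQ_entry)
  have rw: "Q0 0 = (\<lambda>k. if k < 3 then q k else 0)" "Q0 1 = (\<lambda>k. if k < 3 then r k else 0)"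
    "Q0 2 = (\<lambda>k. if k < 3 then p k else 0)" "Q0 (Suc 0) = (\<lambda>k. if k < 3 then r k else 0)" unfolding Q0_def by (auto simp: rows3_def fun_eq_iff)
  have "det3 (mm 3 (mm 3 Q0 S) (tp Q0)) = det3 S"
    using dQ0 by (simp add: det3_mm det3_tp)
  moreover have "det3 (mm 3 (mm 3 Q0 S) (tp Q0)) = - c"
    unfolding det3_def by (simp add: E0 rw dot3_trunc q(2) qp pq pp rq qr c_def)
  ultimately have cdet: "c = - det3 S" by (metis minus_minus)
  define \<kappa> where "\<kappa> = det3 S * g^2"
  have k0: "\<kappa> \<noteq> 0" using dS g(1) by (simp add: \<kappa>_def)
  have dk: "d \<kappa> = 0" unfolding \<kappa>_def
    by (simp only: power2_eq_square dmul[OF D] jacobi3[OF D H] g(2)) (simp add: algebra_simps)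
  define \<mu> where "\<mu> = 2 * \<kappa>"
  have mu0: "\<mu> \<noteq> 0" using k0 by (simp add: \<mu>_def)
  have dmu: "d \<mu> = 0" using dk by (simp add: \<mu>_def dsimps[OF D])
  define Q where "Q = rows3 (\<lambda>i. \<mu> * q i) (\<lambda>i. g * r i) p"
  have rwQ: "Q 0 = (\<lambda>k. if k < 3 then \<mu> * q k else 0)" "Q (Suc 0) = (\<lambda>k. if k < 3 then g * r k else 0)"
    "Q 2 = (\<lambda>k. if k < 3 then p k else 0)" unfolding Q_def by (auto simp: rows3_def fun_eq_iff)
  define Jm :: "'a mx" where "Jm = (\<lambda>i j. if (i = 0 \<and> j = 2) \<or> (i = 2 \<and> j = 0) then \<mu>
      else if i = 1 \<and> j = 1 then - \<mu> / 2 else 0)"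
  have rrk: "g * (g * ?B r r) = - (\<mu> / 2)" using cdet unfolding c_def \<mu>_def \<kappa>_def
    by (simp add: power2_eq_square algebra_simps)
  have QSQ: "mm 3 (mm 3 Q S) (tp Q) = Jm"
  proof (intro ext)
    fix i j
    show "mm 3 (mm 3 Q S) (tp Q) i j = Jm i j"
    proof (cases "i < 3 \<and> j < 3")
      case True
      hence "i < 3" "j < 3" by auto
      thus ?thesis
        by (cases rule: cases33) (simp_all add: QSQ_entry rwQ dot3_trunc bf_scale_r bf_scale_l dot3_scale_r
            q(2) qp pq pp rq qr rrk Jm_def)
    qed (auto simp: mm3_eq Jm_def)
  qed
  define Jinv :: "'a mx" where "Jinv = (\<lambda>i j. if (i = 0 \<and> j = 2) \<or> (i = 2 \<and> j = 0) then inverse \<mu>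
      else if i = 1 \<and> j = 1 then - 2 / \<mu> else 0)"
  have JJ: "mm 3 Jm Jinv = idm 3"
  proof (intro ext)
    fix i j
    show "mm 3 Jm Jinv i j = idm 3 i j"
    proof (cases "i < 3 \<and> j < 3")
      case True
      hence "i < 3" "j < 3" by auto
      thus ?thesis using mu0
        by (cases rule: cases33) (simp_all add: mm3_eq Jm_def Jinv_def idm_def)
    qed (auto simp: mm3_eq idm_def)
  qed
  define P where "P = mm 3 (mm 3 S (tp Q)) Jinv"
  have QP: "mm 3 Q P = idm 3" unfolding P_def using QSQ JJ by (simp flip: mm_assoc)
  have PQ: "mm 3 P Q = idm 3" using lr_inv3(1)[OF QP] .
  define A where "A = mm 3 (mm 3 Q a - dm d 3 Q) P"
  have AQ: "mm 3 A Q = mm 3 Q a - dm d 3 Q" unfolding A_def by (simp add: mm_assoc PQ trunc_diff)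
  have rel: "mm 3 Q a = mm 3 A Q + dm d 3 Q" using AQ by simp
  have "Dop d 3 A (mm 3 (mm 3 Q S) (tp Q)) = mm 3 (mm 3 Q (Dop d 3 a S)) (tp Q)" by (rule transport[OF D rel])
  hence "Dop d 3 A Jm = 0" unfolding QSQ H by simp
  moreover have "dm d 3 Jm = 0"
  proof -
    have "d (inverse (2::'a)) = - d 2 / 2^2" by (rule dinv[OF D]) simp
    hence i2: "d (inverse (2::'a)) = 0" by (simp add: dnumeral[OF D])
    have "d (\<mu> * inverse 2) = 0"
      by (simp only: dmul[OF D] dmu i2) simp
    moreover have "- \<mu> / 2 = - (\<mu> * inverse 2)" by (simp only: divide_inverse minus_mult_left)
    ultimately have "d (- \<mu> / 2) = 0" by (simp only: dneg[OF D]) simp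
    thus ?thesis by (auto simp: dm_def Jm_def fun_eq_iff d0[OF D] dmu)
  qed
  ultimately have H2: "mm 3 A Jm + mm 3 Jm (tp A) = 0" by (simp add: Dop_def)
  have h: "\<And>i j. i < 3 \<Longrightarrow> j < 3 \<Longrightarrow> (A i 0 * Jm 0 j + A i 1 * Jm 1 j + A i 2 * Jm 2 j) + (Jm i 0 * A j 0 + Jm i 1 * A j 1 + Jm i 2 * A j 2) = 0"
  proof -
    fix i j :: nat assume "i < 3" "j < 3"
    thus "?thesis i j" using fun_cong[OF fun_cong[OF H2, of i], of j] by (simp add: mm3_eq tp_def)
  qed
  have "A 0 2 = 0" using h[of 0 0] mu0 by (simp add: Jm_def)
  moreover have "A 1 1 = 0" using h[of 1 1] mu0 by (simp add: Jm_def)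
  moreover have "A 2 0 = 0" using h[of 2 2] mu0 by (simp add: Jm_def)
  moreover have "A 1 2 = A 0 1 / 2"
  proof -
    have "\<mu> * (A 1 2 - A 0 1 / 2) = 0" using h[of 0 1] by (simp add: Jm_def algebra_simps)
    thus ?thesis using mu0 by simp
  qed
  moreover have "A 2 1 = 2 * A 1 0"
  proof -
    have "\<mu> * (A 2 1 - 2 * A 1 0) = 0" using h[of 1 2] by (simp add: Jm_def algebra_simps) (metis)
    thus ?thesis using mu0 by (metis eq_iff_diff_eq_0 mult_eq_0_iff)
  qed
  moreover have "A 2 2 = - A 0 0"
  proof -
    have "\<mu> * (A 2 2 + A 0 0) = 0" using h[of 0 2] by (simp add: Jm_def algebra_simps)
    thus ?thesis using mu0 by (simp add: eq_neg_iff_add_eq_0)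
  qed
  ultimately show ?thesis using QP PQ rel by (intro exI[of _ Q] exI[of _ P] exI[of _ A]) simp
qed
definition NV :: "(nat \<Rightarrow> 'a::zero) set" where "NV = {v. \<forall>i\<ge>2. v i = 0}"
definition ND :: "('a::comm_ring_1 \<Rightarrow> 'a) \<Rightarrow> 'a mx \<Rightarrow> (nat \<Rightarrow> 'a) \<Rightarrow> nat \<Rightarrow> 'a" where
  "ND d B = (\<lambda>v i. if i < 2 then d (v i) + (B i 0 * v 0 + B i 1 * v 1) else 0)"
definition dl :: "nat \<Rightarrow> nat \<Rightarrow> 'a::{zero,one}" where "dl k = (\<lambda>i. if i = k then 1 else 0)"

lemma lincomb_dl: "lincomb c dl 2 = (\<lambda>i. if i < 2 then c i else 0)"
  by (auto simp: lincomb_def dl_def sum2 fun_eq_iff dest!: less2_cases)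

lemma NV_basis: "is_basis (NV :: (nat \<Rightarrow> 'a::field) set) 2 dl"
  unfolding is_basis_def
proof (intro conjI allI impI)
  fix c :: "nat \<Rightarrow> 'a" and k :: nat assume "lincomb c dl 2 = vzero" "k < 2"
  thus "c k = 0" by (auto simp: lincomb_dl vzero_def fun_eq_iff dest: spec[of _ k])
next
  show "NV = {lincomb c dl 2 |c. True}"
  proof -
    have "\<And>v. v \<in> NV \<Longrightarrow> v = lincomb v dl 2" by (auto simp: NV_def lincomb_dl fun_eq_iff)
    thus ?thesis by (auto simp: NV_def lincomb_dl)
  qed
qed

lemma NV_dmod:
  fixes d :: "'a::field_char_0 \<Rightarrow> 'a"
  assumes D: "diff_field d"
  shows "dmod d (NV, ND d B)"
  unfolding dmod_def
proof (intro conjI ballI allI)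
  show "\<exists>n. has_dim (fst (NV, ND d B)) n" using NV_basis by (auto simp: has_dim_def)
qed (auto simp: NV_def ND_def vadd_def vscale_def fun_eq_iff dsimps[OF D] algebra_simps)

lemma mdim_NV: "mdim (NV :: (nat \<Rightarrow> 'a::field) set) = 2"
  using NV_basis by (auto simp: has_dim_def intro!: mdim_eq)


lemma N_facts:
  fixes d :: "'a::field_char_0 \<Rightarrow> 'a" and B :: "'a mx"
  assumes D: "diff_field d" and trB: "B 1 1 = - B 0 0"
  defines "N \<equiv> (NV, ND d B)"
  shows "\<exists>P2 Q2. mm 2 P2 Q2 = idm 2 \<and> mm 2 Q2 P2 = idm 2 \<and> mm 2 Q2 B = mm 2 (cmat N) Q2 + dm d 2 Q2
     \<and> det2 P2 \<noteq> 0 \<and> d (det2 P2) = (cmat N 0 0 + cmat N 1 1) * det2 P2"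
proof -
  have H2: "has_dim (fst N) 2" using NV_basis by (auto simp: N_def has_dim_def)
  have DM: "dmod d N" unfolding N_def by (rule NV_dmod[OF D])
  let ?c = "cbasis N" and ?\<beta> = "cmat N"
  have Bc: "is_basis NV 2 ?c" using cbasis[OF H2] by (simp add: N_def)
  have spec: "\<And>j. j < 2 \<Longrightarrow> ND d B (?c j) = lincomb (\<lambda>i. ?\<beta> i j) ?c 2"
    using cmat[OF DM H2] by (simp add: N_def)
  have cz: "\<And>j i. j < 2 \<Longrightarrow> 2 \<le> i \<Longrightarrow> ?c j i = 0" using basis_in[OF Bc] by (auto simp: NV_def)
  define P2 where "P2 = trunc 2 (\<lambda>i j. ?c j i)"
  have rel: "mm 2 P2 ?\<beta> = mm 2 B P2 + dm d 2 P2"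
  proof (intro ext)
    fix i j show "mm 2 P2 ?\<beta> i j = (mm 2 B P2 + dm d 2 P2) i j"
    proof (cases "i < 2 \<and> j < 2")
      case True
      have "ND d B (?c j) i = lincomb (\<lambda>i. ?\<beta> i j) ?c 2 i" using spec True by simp
      thus ?thesis using True by (simp add: mm2_eq P2_def trunc_def dm_def ND_def lincomb_def sum2 algebra_simps)
    qed (auto simp: mm2_eq dm_def)
  qed
  have dP: "det2 P2 \<noteq> 0"
  proof
    assume z: "det2 P2 = 0"
    have "\<exists>x. (\<exists>k<2. x k \<noteq> 0) \<and> lincomb x ?c 2 = vzero"
    proof -
      let ?p = "\<lambda>i j. ?c j i"
      have z': "?p 0 0 * ?p 1 1 - ?p 0 1 * ?p 1 0 = 0" using z by (simp add: det2_def P2_def trunc_def)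
      have lc: "\<And>x. lincomb x ?c 2 = vzero \<longleftrightarrow> (x 0 * ?p 0 0 + x 1 * ?p 0 1 = 0 \<and> x 0 * ?p 1 0 + x 1 * ?p 1 1 = 0)"
      proof -
        fix x :: "nat \<Rightarrow> 'a"
        have "lincomb x ?c 2 = vzero \<longleftrightarrow> (\<forall>i. x 0 * ?p i 0 + x 1 * ?p i 1 = 0)"
          by (simp add: lincomb_def vzero_def fun_eq_iff sum2)
        also have "\<dots> \<longleftrightarrow> (x 0 * ?p 0 0 + x 1 * ?p 0 1 = 0 \<and> x 0 * ?p 1 0 + x 1 * ?p 1 1 = 0)"
        proof
          assume h: "x 0 * ?p 0 0 + x 1 * ?p 0 1 = 0 \<and> x 0 * ?p 1 0 + x 1 * ?p 1 1 = 0"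
          show "\<forall>i. x 0 * ?p i 0 + x 1 * ?p i 1 = 0"
          proof
            fix i :: nat show "x 0 * ?p i 0 + x 1 * ?p i 1 = 0"
              using h cz[of 0 i] cz[of 1 i] by (cases "i < 2") (auto dest!: less2_cases)
          qed
        qed auto
        finally show "?thesis x" .
      qed
      show ?thesis
      proof (cases "?p 1 1 \<noteq> 0 \<or> ?p 1 0 \<noteq> 0")
        case True
        let ?x = "\<lambda>k::nat. if k = 0 then ?p 1 1 else - ?p 1 0"
        have "lincomb ?x ?c 2 = vzero" unfolding lc using z' by (simp add: algebra_simps)
        moreover have "\<exists>k<2. ?x k \<noteq> 0" using True by (metis (full_types) neg_equal_0_iff_equal one_less_numeral_iff semiring_norm(76) zero_less_numeral zero_neq_one)
        ultimately show ?thesis by (intro exI[of _ ?x]) simp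
      next
        case F1: False
        show ?thesis
        proof (cases "?p 0 1 \<noteq> 0 \<or> ?p 0 0 \<noteq> 0")
          case True
          let ?x = "\<lambda>k::nat. if k = 0 then ?p 0 1 else - ?p 0 0"
          have "lincomb ?x ?c 2 = vzero" unfolding lc using z' by (simp add: algebra_simps)
          moreover have "\<exists>k<2. ?x k \<noteq> 0" using True by (metis (full_types) neg_equal_0_iff_equal one_less_numeral_iff semiring_norm(76) zero_less_numeral zero_neq_one)
          ultimately show ?thesis by (intro exI[of _ ?x]) simp
        next
          case False
          let ?x = "\<lambda>k::nat. if k = 0 then 1 else (0::'a)"
          have "lincomb ?x ?c 2 = vzero" unfolding lc using False F1 by simp
          moreover have "\<exists>k<2. ?x k \<noteq> 0" by auto
          ultimately show ?thesis by (intro exI[of _ ?x]) simp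
        qed
      qed
    qed
    then obtain x k where "k < 2" "x k \<noteq> 0" "lincomb x ?c 2 = vzero" by blast
    thus False using lincomb_eq0[OF Bc, of x k] by (simp add: vzero_eq)
  qed
  define Q2 where "Q2 = inv2 P2"
  have PQ: "mm 2 P2 Q2 = idm 2" and QP: "mm 2 Q2 P2 = idm 2" using inv2[OF dP] by (simp_all add: Q2_def)
  have rel2: "mm 2 Q2 B = mm 2 ?\<beta> Q2 + dm d 2 Q2" by (rule inv_rel[OF D PQ QP rel])
  have "mm 2 Q2 (mm 2 P2 ?\<beta>) = trunc 2 ?\<beta>" by (simp flip: mm_assoc add: QP)
  hence be: "\<And>i j. i < 2 \<Longrightarrow> j < 2 \<Longrightarrow> ?\<beta> i j = mm 2 Q2 (mm 2 B P2 + dm d 2 P2) i j"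
    unfolding rel by (auto simp: trunc_def fun_eq_iff dest: spec)
  have trB': "B (Suc 0) (Suc 0) = - B 0 0" using trB by simp
  have b00: "?\<beta> 0 0 = inverse (det2 P2) * (P2 1 1 * (B 0 0 * P2 0 0 + B 0 1 * P2 1 0 + d (P2 0 0))
      - P2 0 1 * (B 1 0 * P2 0 0 + B 1 1 * P2 1 0 + d (P2 1 0)))"
    using be[of 0 0] by (simp add: Q2_def inv2_def trunc_def mm2_eq dm_def algebra_simps)
  have b11: "?\<beta> 1 1 = inverse (det2 P2) * (P2 0 0 * (B 1 0 * P2 0 1 + B 1 1 * P2 1 1 + d (P2 1 1))
      - P2 1 0 * (B 0 0 * P2 0 1 + B 0 1 * P2 1 1 + d (P2 0 1)))"
    using be[of 1 1] by (simp add: Q2_def inv2_def trunc_def mm2_eq dm_def algebra_simps)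
  have tr: "d (det2 P2) = (?\<beta> 0 0 + ?\<beta> 1 1) * det2 P2"
  proof -
    have "(?\<beta> 0 0 + ?\<beta> 1 1) * det2 P2 = inverse (det2 P2) * det2 P2 *
       (P2 1 1 * (B 0 0 * P2 0 0 + B 0 1 * P2 1 0 + d (P2 0 0))
      - P2 0 1 * (B 1 0 * P2 0 0 + B 1 1 * P2 1 0 + d (P2 1 0))
      + P2 0 0 * (B 1 0 * P2 0 1 + B 1 1 * P2 1 1 + d (P2 1 1))
      - P2 1 0 * (B 0 0 * P2 0 1 + B 0 1 * P2 1 1 + d (P2 0 1)))"
      unfolding b00 b11 by (simp add: algebra_simps)
    also have "\<dots> = (P2 1 1 * (B 0 0 * P2 0 0 + B 0 1 * P2 1 0 + d (P2 0 0))
      - P2 0 1 * (B 1 0 * P2 0 0 + B 1 1 * P2 1 0 + d (P2 1 0))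
      + P2 0 0 * (B 1 0 * P2 0 1 + B 1 1 * P2 1 1 + d (P2 1 1))
      - P2 1 0 * (B 0 0 * P2 0 1 + B 0 1 * P2 1 1 + d (P2 0 1)))" using dP by simp
    also have "\<dots> = d (det2 P2)" unfolding det2_def trB by (simp add: dsimps[OF D] algebra_simps)
    finally show ?thesis ..
  qed
  show ?thesis using PQ QP rel2 dP tr by blast
qed

lemma sym2_fst: "fst (sym2_mod d M) = {S. \<forall>i j. S (i, j) = S (j, i) \<and> (mdim (fst M) \<le> i \<longrightarrow> S (i, j) = 0)}"
  by (simp add: sym2_mod_def Let_def)

lemma sym2_snd: "snd (sym2_mod d M) F = (\<lambda>(i,j). Dop d (mdim (fst M)) (cmat M) (\<lambda>i j. F (i,j)) i j)"
  by (auto simp: sym2_mod_def Let_def Dop_def dm_def mm_def tp_def fun_eq_iff)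

lemma Dop3_entry:
  assumes "Dop d 3 a S = 0" "i < 3" "j < 3"
  shows "d (S i j) = - ((a i 0 * S 0 j + a i 1 * S 1 j + a i 2 * S 2 j) + (S i 0 * a j 0 + S i 1 * a j 1 + S i 2 * a j 2))"
proof -
  from fun_cong[OF fun_cong[OF assms(1), of i], of j] assms(2,3)
  have "d (S i j) + ((a i 0 * S 0 j + a i 1 * S 1 j + a i 2 * S 2 j)
     + (S i 0 * a j 0 + S i 1 * a j 1 + S i 2 * a j 2)) = 0"
    by (simp add: Dop_def dm_def mm3_eq tp_def add.assoc)
  thus ?thesis by (simp only: eq_neg_iff_add_eq_0)
qed

lemma irr_inv:
  fixes d :: "'a::field_char_0 \<Rightarrow> 'a" and M :: "('i, 'a) dmodule"
  assumes D: "diff_field d" and DM: "dmod d M" and IR: "irreducible_dmod d M"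
    and Bb: "is_basis (fst M) 3 b" and Ca: "\<And>j. j < 3 \<Longrightarrow> snd M (b j) = lincomb (\<lambda>i. a i j) b 3"
    and H: "Dop d 3 a S = 0" and Snz: "i0 < 3" "j0 < 3" "S i0 j0 \<noteq> 0"
  shows "\<exists>T. mm 3 S T = idm 3"
proof -
  have DM': "dmod d (fst M, snd M)" using DM by simp
  define W where "W = {lincomb (mv3 S v) b 3 | v. True}"
  have mv_add: "\<And>v w. mv3 S (\<lambda>i. v i + w i) = (\<lambda>i. mv3 S v i + mv3 S w i)"
    by (simp add: mv3_def fun_eq_iff algebra_simps)
  have mv_sc: "\<And>c v. mv3 S (\<lambda>i. c * v i) = (\<lambda>i. c * mv3 S v i)"
    by (simp add: mv3_def fun_eq_iff algebra_simps)
  have sub: "subspace_of W (fst M)"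
    unfolding subspace_of_def
  proof (intro conjI ballI allI)
    show "W \<subseteq> fst M" using lincomb_in[OF Bb] by (auto simp: W_def)
    have "vzero = lincomb (mv3 S (\<lambda>_. 0)) b 3" by (simp add: mv3_def lincomb_zero)
    thus "vzero \<in> W" by (auto simp: W_def)
  next
    fix u v assume "u \<in> W" "v \<in> W"
    then obtain x y where "u = lincomb (mv3 S x) b 3" "v = lincomb (mv3 S y) b 3" by (auto simp: W_def)
    hence "vadd u v = lincomb (mv3 S (\<lambda>i. x i + y i)) b 3" by (simp add: mv_add lincomb_add)
    thus "vadd u v \<in> W" by (auto simp: W_def)
  next
    fix c v assume "v \<in> W"
    then obtain x where "v = lincomb (mv3 S x) b 3" by (auto simp: W_def)
    hence "vscale c v = lincomb (mv3 S (\<lambda>i. c * x i)) b 3" by (simp add: mv_sc lincomb_scale)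
    thus "vscale c v \<in> W" by (auto simp: W_def)
  qed
  have stab: "\<forall>x\<in>W. snd M x \<in> W"
  proof
    fix x assume "x \<in> W"
    then obtain v where x: "x = lincomb (mv3 S v) b 3" by (auto simp: W_def)
    define w where "w = (\<lambda>k. d (v k) - (a 0 k * v 0 + a 1 k * v 1 + a 2 k * v 2))"
    have "snd M x = lincomb (\<lambda>i. d (mv3 S v i) + (\<Sum>j<3. a i j * mv3 S v j)) b 3"
      unfolding x by (rule D_lincomb[OF DM' Bb Ca])
    also have "\<dots> = lincomb (mv3 S w) b 3"
    proof (rule lincomb_cong)
      fix i :: nat assume i: "i < 3"
      show "d (mv3 S v i) + (\<Sum>j<3. a i j * mv3 S v j) = mv3 S w i"
        unfolding mv3_def w_def sum3
        by (simp add: dsimps[OF D] Dop3_entry[OF H i] algebra_simps)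
    qed
    finally show "snd M x \<in> W" by (auto simp: W_def)
  qed
  have "W = {vzero} \<or> W = fst M" using IR sub stab by (auto simp: irreducible_dmod_def)
  moreover have "W \<noteq> {vzero}"
  proof
    assume "W = {vzero}"
    moreover have "lincomb (mv3 S (dl j0)) b 3 \<in> W" by (auto simp: W_def)
    ultimately have "lincomb (mv3 S (dl j0)) b 3 = 0" by (simp add: vzero_eq)
    from lincomb_eq0[OF Bb this Snz(1)] Snz show False
      by (auto simp: mv3_def dl_def dest!: less3_cases)
  qed
  ultimately have WV: "W = fst M" by blast
  have ex: "\<And>k. k < 3 \<Longrightarrow> \<exists>v. b k = lincomb (mv3 S v) b 3"
    using basis_in[OF Bb] WV by (auto simp: W_def)
  define T where "T = (\<lambda>i k. (SOME v. b k = lincomb (mv3 S v) b 3) i)"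
  have Tk: "\<And>k. k < 3 \<Longrightarrow> b k = lincomb (mv3 S (\<lambda>i. T i k)) b 3"
    unfolding T_def using ex by (metis (mono_tags) someI_ex)
  have "mm 3 S T = idm 3"
  proof (intro ext)
    fix i k show "mm 3 S T i k = idm 3 i k"
    proof (cases "i < 3 \<and> k < 3")
      case True
      have "lincomb (dl k) b 3 = lincomb (mv3 S (\<lambda>i. T i k)) b 3"
        using Tk True lincomb_delta[of k 3 b] by (simp add: dl_def)
      from lincomb_inj[OF Bb this, of i] True show ?thesis
        by (simp add: mm3_eq mv3_def dl_def idm_def)
    qed (auto simp: mm3_eq idm_def)
  qed
  thus ?thesis by blast
qed

definition Um :: "(nat \<Rightarrow> 'a::zero) \<Rightarrow> 'a mx" where
  "Um c = (\<lambda>i j. if i = 0 \<and> j = 0 then c 0 else if i = 1 \<and> j = 1 then c 2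
      else if (i = 0 \<and> j = 1) \<or> (i = 1 \<and> j = 0) then c 1 else 0)"

definition Bmat :: "'a::field mx \<Rightarrow> 'a mx" where
  "Bmat A = (\<lambda>i j. if i = 0 \<and> j = 0 then A 0 0 / 2 else if i = 0 \<and> j = 1 then A 0 1 / 2
      else if i = 1 \<and> j = 0 then A 1 0 else if i = 1 \<and> j = 1 then - A 0 0 / 2 else 0)"

lemma Um_cong: "(\<And>i. i < 3 \<Longrightarrow> u i = w i) \<Longrightarrow> Um u = Um w"
  by (simp add: Um_def fun_eq_iff)
lemma Um_add: "Um (\<lambda>i. u i + w i) = Um u + Um (w :: nat \<Rightarrow> 'a::comm_ring_1)"
  by (simp add: Um_def fun_eq_iff)
lemma Um_scale: "Um (\<lambda>i. c * u i) = smx c (Um (u :: nat \<Rightarrow> 'a::comm_ring_1))"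
  by (simp add: Um_def smx_def fun_eq_iff)
lemma Um_tp: "tp (Um c) = Um c" by (auto simp: Um_def tp_def fun_eq_iff)
lemma Um_trunc: "trunc 2 (Um c) = Um c" by (auto simp: Um_def trunc_def fun_eq_iff)
lemma Um_inj: "Um u = Um w \<Longrightarrow> i < 3 \<Longrightarrow> u i = w i"
proof -
  assume "Um u = Um w" "i < 3"
  hence "Um u 0 0 = Um w 0 0" "Um u 0 1 = Um w 0 1" "Um u 1 1 = Um w 1 1" by auto
  thus "u i = w i" using \<open>i < 3\<close> by (auto simp: Um_def dest!: less3_cases)
qed

lemma Um_D:
  fixes d :: "'a::field_char_0 \<Rightarrow> 'a"
  assumes A: "A 0 2 = 0" "A 1 1 = 0" "A 2 0 = 0" "A 1 2 = A 0 1 / 2" "A 2 1 = 2 * A 1 0" "A 2 2 = - A 0 0"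
  shows "Um (\<lambda>i. d (u i) + mv3 A u i) = Dop d 2 (Bmat A) (Um u)"
proof (intro ext)
  fix i j
  show "Um (\<lambda>i. d (u i) + mv3 A u i) i j = Dop d 2 (Bmat A) (Um u) i j"
  proof (cases "i < 2 \<and> j < 2")
    case True
    hence "i = 0 \<and> j = 0 \<or> i = 0 \<and> j = 1 \<or> i = 1 \<and> j = 0 \<or> i = 1 \<and> j = 1" by auto
    thus ?thesis using A
      by (elim disjE) (simp_all add: Um_def Dop_def dm_def mm2_eq tp_def Bmat_def mv3_def field_simps)
  qed (auto simp: Um_def Dop_def dm_def mm2_eq)
qed

lemma mv3_inv: assumes "mm 3 P Q = idm 3" "k < 3" shows "mv3 P (mv3 Q c) k = c k"
proof -
  have e: "\<And>j. j < 3 \<Longrightarrow> P k 0 * Q 0 j + P k 1 * Q 1 j + P k 2 * Q 2 j = (if k = j then 1 else 0)"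
  proof -
    fix j :: nat assume "j < 3"
    have "mm 3 P Q k j = idm 3 k j" using assms(1) by simp
    thus "?thesis j" using \<open>j < 3\<close> assms(2) by (simp add: mm3_eq idm_def)
  qed
  have "mv3 P (mv3 Q c) k = c 0 * (P k 0 * Q 0 0 + P k 1 * Q 1 0 + P k 2 * Q 2 0)
     + c 1 * (P k 0 * Q 0 1 + P k 1 * Q 1 1 + P k 2 * Q 2 1) + c 2 * (P k 0 * Q 0 2 + P k 1 * Q 1 2 + P k 2 * Q 2 2)"
    by (simp add: mv3_def algebra_simps)
  also have "\<dots> = c k" using assms(2) e[of 0] e[of 1] e[of 2] by (auto dest!: less3_cases)
  finally show ?thesis .
qed

lemma rel_entry:
  assumes "mm 3 Q a = mm 3 A Q + dm d 3 Q" "i < 3" "j < 3"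
  shows "d (Q i j) = (Q i 0 * a 0 j + Q i 1 * a 1 j + Q i 2 * a 2 j) - (A i 0 * Q 0 j + A i 1 * Q 1 j + A i 2 * Q 2 j)"
proof -
  from fun_cong[OF fun_cong[OF assms(1), of i], of j] assms(2,3)
  have "Q i 0 * a 0 j + Q i 1 * a 1 j + Q i 2 * a 2 j = (A i 0 * Q 0 j + A i 1 * Q 1 j + A i 2 * Q 2 j) + d (Q i j)"
    by (simp add: mm3_eq dm_def)
  thus ?thesis by (simp add: algebra_simps)
qed

lemma coord_D:
  fixes d :: "'a::field_char_0 \<Rightarrow> 'a"
  assumes D: "diff_field d" and rel: "mm 3 Q a = mm 3 A Q + dm d 3 Q" and i: "i < 3"
  shows "mv3 Q (\<lambda>k. d (c k) + (\<Sum>j<3. a k j * c j)) i = d (mv3 Q c i) + mv3 A (mv3 Q c) i"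
  unfolding mv3_def sum3
  by (simp add: dsimps[OF D] rel_entry[OF rel i] algebra_simps)

lemma conj_inv: assumes "mm n P Q = idm n"
  shows "mm n (mm n P (mm n (mm n Q U) (tp Q))) (tp P) = trunc n U"
proof -
  have t: "tp (idm n) = (idm n :: 'a::comm_ring_1 mx)" by (auto simp: tp_def idm_def fun_eq_iff)
  have "mm n (tp Q) (tp P) = tp (mm n P Q)" by (simp add: tp_mm)
  hence tt: "mm n (tp Q) (tp P) = idm n" using assms t by simp
  have "mm n (mm n P (mm n (mm n Q U) (tp Q))) (tp P) = mm n P (mm n (mm n Q U) (mm n (tp Q) (tp P)))"
    by (simp add: mm_assoc)
  also have "\<dots> = mm n (mm n P Q) U" by (simp add: tt mm_assoc)
  finally show ?thesis using assms by simp
qed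

lemma conj_tp: "tp (mm n (mm n Q U) (tp Q)) = mm n (mm n Q (tp U)) (tp Q)"
  by (simp add: tp_mm mm_assoc)

lemma backward:
  fixes d :: "'a::field_char_0 \<Rightarrow> 'a" and M :: "('i, 'a) dmodule"
  assumes D: "diff_field d" and C: "C1_field TYPE('a)" and DM: "dmod d M" and IR: "irreducible_dmod d M"
    and H3: "has_dim (fst M) 3" and DET: "dmod_iso (det_mod d M) (triv_mod d)"
    and F: "F \<in> fst (sym2_mod d M)" and Fnz: "F \<noteq> vzero" and Fh: "snd (sym2_mod d M) F = vzero"
  shows "\<exists>N :: (nat, 'a) dmodule. dmod d N \<and> has_dim (fst N) 2
            \<and> dmod_iso (det_mod d N) (triv_mod d) \<and> dmod_iso M (sym2_mod d N)"
proof -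
  have md: "mdim (fst M) = 3" by (rule mdim_eq[OF H3])
  define b where "b = cbasis M"
  define a where "a = cmat M"
  have Bb: "is_basis (fst M) 3 b" unfolding b_def by (rule cbasis[OF H3])
  have Ca: "\<And>j. j < 3 \<Longrightarrow> snd M (b j) = lincomb (\<lambda>i. a i j) b 3"
    unfolding a_def b_def by (rule cmat[OF DM H3])
  have DM': "dmod d (fst M, snd M)" using DM by simp
  obtain g where g: "g \<noteq> 0" "d g = (a 0 0 + a 1 1 + a 2 2) * g"
    using det_iso_g[OF D DET] md by (auto simp: a_def sum3)
  define S where "S = (\<lambda>i j. F (i, j))"
  have Fs: "\<And>i j. F (i, j) = F (j, i)" "\<And>i j. 3 \<le> i \<Longrightarrow> F (i, j) = 0"
    using F md by (auto simp: sym2_fst)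
  have Ssym: "\<And>i j. S i j = S j i" using Fs by (simp add: S_def)
  have St: "trunc 3 S = S" using Fs by (auto simp: trunc_def S_def fun_eq_iff) (metis not_le)
  have H: "Dop d 3 a S = 0"
  proof (intro ext)
    fix i j
    have "snd (sym2_mod d M) F (i, j) = vzero (i, j)" using Fh by simp
    thus "Dop d 3 a S i j = 0 i j" by (simp add: sym2_snd md a_def S_def vzero_def)
  qed
  obtain i0 j0 where ij0: "F (i0, j0) \<noteq> 0" using Fnz by (auto simp: vzero_def fun_eq_iff)
  have ij3: "i0 < 3" "j0 < 3" using ij0 Fs by (metis not_le)+
  obtain T where ST: "mm 3 S T = idm 3"
    using irr_inv[OF D DM IR Bb Ca H ij3] ij0 by (auto simp: S_def)
  obtain Q P A where QP: "mm 3 Q P = idm 3" and PQ: "mm 3 P Q = idm 3"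
    and rel: "mm 3 Q a = mm 3 A Q + dm d 3 Q"
    and Af: "A 0 2 = 0" "A 1 1 = 0" "A 2 0 = 0" "A 1 2 = A 0 1 / 2" "A 2 1 = 2 * A 1 0" "A 2 2 = - A 0 0"
    using core[OF D C g St Ssym H ST] by blast
  define B where "B = Bmat A"
  have trB: "B 1 1 = - B 0 0" by (simp add: B_def Bmat_def)
  define N :: "(nat, 'a) dmodule" where "N = (NV, ND d B)"
  obtain P2 Q2 where PQ2: "mm 2 P2 Q2 = idm 2" and QP2: "mm 2 Q2 P2 = idm 2"
    and rel2: "mm 2 Q2 B = mm 2 (cmat N) Q2 + dm d 2 Q2" and dP2: "det2 P2 \<noteq> 0"
    and trP2: "d (det2 P2) = (cmat N 0 0 + cmat N 1 1) * det2 P2"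
    using N_facts[of d B, OF D trB] unfolding N_def by blast
  have DN: "dmod d N" unfolding N_def by (rule NV_dmod[OF D])
  have HN: "has_dim (fst N) 2" using NV_basis by (auto simp: N_def has_dim_def)
  have mdN: "mdim (fst N) = 2" by (rule mdim_eq[OF HN])
  have detN: "dmod_iso (det_mod d N) (triv_mod d)"
    by (rule det_iso_of_g[OF D dP2]) (simp add: mdN sum2 trP2)
  let ?\<beta> = "cmat N"
  define Phi where "Phi U = mm 2 (mm 2 Q2 U) (tp Q2)" for U
  define Psi where "Psi x = (\<lambda>(i, j). Phi (Um (mv3 Q (crd 3 b x))) i j)" for x
  have crd_add: "\<And>x y k. x \<in> fst M \<Longrightarrow> y \<in> fst M \<Longrightarrow> k < 3 \<Longrightarrow>
      crd 3 b (vadd x y) k = crd 3 b x k + crd 3 b y k"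
  proof -
    fix x y k assume xy: "x \<in> fst M" "y \<in> fst M" "k < (3::nat)"
    have "vadd x y = lincomb (\<lambda>k. crd 3 b x k + crd 3 b y k) b 3"
      using crd[OF Bb xy(1)] crd[OF Bb xy(2)] by (simp add: lincomb_add)
    thus "crd 3 b (vadd x y) k = crd 3 b x k + crd 3 b y k" using crd_lincomb[OF Bb xy(3)] by simp
  qed
  have crd_sc: "\<And>c x k. x \<in> fst M \<Longrightarrow> k < 3 \<Longrightarrow> crd 3 b (vscale c x) k = c * crd 3 b x k"
  proof -
    fix c x k assume xy: "x \<in> fst M" "k < (3::nat)"
    have "vscale c x = lincomb (\<lambda>k. c * crd 3 b x k) b 3"
      using crd[OF Bb xy(1)] by (simp add: lincomb_scale)
    thus "crd 3 b (vscale c x) k = c * crd 3 b x k" using crd_lincomb[OF Bb xy(2)] by simp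
  qed
  have crd_D: "\<And>x k. x \<in> fst M \<Longrightarrow> k < 3 \<Longrightarrow>
      crd 3 b (snd M x) k = d (crd 3 b x k) + (\<Sum>j<3. a k j * crd 3 b x j)"
  proof -
    fix x k assume xy: "x \<in> fst M" "k < (3::nat)"
    have "snd M x = lincomb (\<lambda>i. d (crd 3 b x i) + (\<Sum>j<3. a i j * crd 3 b x j)) b 3"
      using crd[OF Bb xy(1)] D_lincomb[OF DM' Bb Ca] by metis
    thus "crd 3 b (snd M x) k = d (crd 3 b x k) + (\<Sum>j<3. a k j * crd 3 b x j)"
      using crd_lincomb[OF Bb xy(2)] by simp
  qed
  have mv3_cong: "\<And>Z u w. (\<And>k. k < 3 \<Longrightarrow> u k = w k) \<Longrightarrow> mv3 Z u = mv3 Z w"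
    by (simp add: mv3_def)
  have lin_add: "\<forall>x\<in>fst M. \<forall>y\<in>fst M. Psi (vadd x y) = vadd (Psi x) (Psi y)"
  proof (intro ballI)
    fix x y assume xy: "x \<in> fst M" "y \<in> fst M"
    have "mv3 Q (crd 3 b (vadd x y)) = (\<lambda>i. mv3 Q (crd 3 b x) i + mv3 Q (crd 3 b y) i)"
      using crd_add[OF xy] by (simp add: mv3_def fun_eq_iff algebra_simps)
    hence e: "Um (mv3 Q (crd 3 b (vadd x y))) = Um (mv3 Q (crd 3 b x)) + Um (mv3 Q (crd 3 b y))"
      by (simp only: Um_add)
    show "Psi (vadd x y) = vadd (Psi x) (Psi y)"
      unfolding Psi_def Phi_def e by (simp add: mm_add_l mm_add_r vadd_def fun_eq_iff)
  qed
  have lin_sc: "\<forall>c. \<forall>x\<in>fst M. Psi (vscale c x) = vscale c (Psi x)"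
  proof (intro allI ballI)
    fix c x assume x: "x \<in> fst M"
    have "mv3 Q (crd 3 b (vscale c x)) = (\<lambda>i. c * mv3 Q (crd 3 b x) i)"
      using crd_sc[OF x] by (simp add: mv3_def fun_eq_iff algebra_simps)
    hence e: "Um (mv3 Q (crd 3 b (vscale c x))) = smx c (Um (mv3 Q (crd 3 b x)))"
      by (simp only: Um_scale)
    show "Psi (vscale c x) = vscale c (Psi x)"
      unfolding Psi_def Phi_def e mm_smx_l mm_smx_r by (simp add: vscale_def fun_eq_iff smx_def)
  qed
  have comD: "\<forall>x\<in>fst M. Psi (snd M x) = snd (sym2_mod d N) (Psi x)"
  proof
    fix x assume x: "x \<in> fst M"
    let ?c = "mv3 Q (crd 3 b x)"
    have "Um (mv3 Q (crd 3 b (snd M x))) = Um (\<lambda>i. d (?c i) + mv3 A ?c i)"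
    proof (rule Um_cong)
      fix i :: nat assume i: "i < 3"
      have "mv3 Q (crd 3 b (snd M x)) = mv3 Q (\<lambda>k. d (crd 3 b x k) + (\<Sum>j<3. a k j * crd 3 b x j))"
        by (rule mv3_cong) (simp add: crd_D[OF x])
      thus "mv3 Q (crd 3 b (snd M x)) i = d (?c i) + mv3 A ?c i"
        using coord_D[OF D rel i] by simp
    qed
    also have "\<dots> = Dop d 2 B (Um ?c)" unfolding B_def by (rule Um_D[OF Af])
    finally have "Phi (Um (mv3 Q (crd 3 b (snd M x)))) = Dop d 2 ?\<beta> (Phi (Um ?c))"
      unfolding Phi_def using transport[OF D rel2] by simp
    thus "Psi (snd M x) = snd (sym2_mod d N) (Psi x)"
      by (simp add: Psi_def sym2_snd mdN fun_eq_iff)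
  qed
  have cPsi: "\<And>x. (\<lambda>i j. Psi x (i, j)) = Phi (Um (mv3 Q (crd 3 b x)))" by (simp add: Psi_def)
  have inj: "inj_on Psi (fst M)"
  proof (rule inj_onI)
    fix x y assume x: "x \<in> fst M" and y: "y \<in> fst M" and e: "Psi x = Psi y"
    have "Phi (Um (mv3 Q (crd 3 b x))) = Phi (Um (mv3 Q (crd 3 b y)))" using cPsi[of x] cPsi[of y] e by simp
    hence "mm 2 (mm 2 P2 (Phi (Um (mv3 Q (crd 3 b x))))) (tp P2) = mm 2 (mm 2 P2 (Phi (Um (mv3 Q (crd 3 b y))))) (tp P2)"
      by simp
    hence "Um (mv3 Q (crd 3 b x)) = Um (mv3 Q (crd 3 b y))"
      unfolding Phi_def conj_inv[OF PQ2] by (simp add: Um_trunc)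
    hence e2: "\<And>i. i < 3 \<Longrightarrow> mv3 Q (crd 3 b x) i = mv3 Q (crd 3 b y) i" by (rule Um_inj)
    have "\<And>k. k < 3 \<Longrightarrow> crd 3 b x k = crd 3 b y k"
    proof -
      fix k :: nat assume k: "k < 3"
      have "crd 3 b x k = mv3 P (mv3 Q (crd 3 b x)) k" using mv3_inv[OF PQ k] by simp
      also have "\<dots> = mv3 P (mv3 Q (crd 3 b y)) k"
        unfolding mv3_def[of P] using e2[of 0] e2[of 1] e2[of 2] by simp
      also have "\<dots> = crd 3 b y k" using mv3_inv[OF PQ k] by simp
      finally show "crd 3 b x k = crd 3 b y k" .
    qed
    hence "lincomb (crd 3 b x) b 3 = lincomb (crd 3 b y) b 3" by (rule lincomb_cong)
    thus "x = y" using crd[OF Bb x] crd[OF Bb y] by simp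
  qed
  have img1: "Psi ` fst M \<subseteq> fst (sym2_mod d N)"
  proof
    fix z assume "z \<in> Psi ` fst M"
    then obtain x where z: "z = Psi x" by blast
    have "tp (Phi (Um (mv3 Q (crd 3 b x)))) = Phi (Um (mv3 Q (crd 3 b x)))"
      unfolding Phi_def conj_tp Um_tp ..
    hence "\<And>i j. Phi (Um (mv3 Q (crd 3 b x))) j i = Phi (Um (mv3 Q (crd 3 b x))) i j"
      by (metis tp_def)
    moreover have "\<And>i j. 2 \<le> i \<Longrightarrow> Phi (Um (mv3 Q (crd 3 b x))) i j = 0"
      by (simp add: Phi_def mm_def)
    ultimately show "z \<in> fst (sym2_mod d N)" unfolding z sym2_fst mdN Psi_def by auto
  qed
  have img2: "fst (sym2_mod d N) \<subseteq> Psi ` fst M"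
  proof
    fix Tp assume Tp: "Tp \<in> fst (sym2_mod d N)"
    define Tm where "Tm = (\<lambda>i j. Tp (i, j))"
    have Tsym: "\<And>i j. Tm i j = Tm j i" and Tz: "\<And>i j. 2 \<le> i \<Longrightarrow> Tm i j = 0"
      using Tp by (auto simp: sym2_fst mdN Tm_def)
    have Tt: "trunc 2 Tm = Tm" using Tsym Tz by (auto simp: trunc_def fun_eq_iff) (metis not_le)
    define U where "U = mm 2 (mm 2 P2 Tm) (tp P2)"
    have "tp Tm = Tm" using Tsym by (simp add: tp_def fun_eq_iff)
    hence Utp: "tp U = U" unfolding U_def conj_tp by simp
    define c' where "c' = (\<lambda>i::nat. if i = 0 then U 0 0 else if i = 1 then U 0 1 else U 1 1)"
    have Uc: "Um c' = U"
    proof (intro ext)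
      fix i j
      have s: "U 1 0 = U 0 1" using fun_cong[OF fun_cong[OF Utp, of 0], of 1] by (simp add: tp_def)
      show "Um c' i j = U i j"
      proof (cases "i < 2 \<and> j < 2")
        case True
        hence "i = 0 \<and> j = 0 \<or> i = 0 \<and> j = 1 \<or> i = 1 \<and> j = 0 \<or> i = 1 \<and> j = 1" by auto
        thus ?thesis using s by (elim disjE) (simp_all add: Um_def c'_def)
      next
        case False
        hence "U i j = 0" by (auto simp: U_def mm_def)
        moreover have "Um c' i j = 0" using False by (auto simp: Um_def)
        ultimately show ?thesis by simp
      qed
    qed
    define c where "c = mv3 P c'"
    define x where "x = lincomb c b 3"
    have x: "x \<in> fst M" unfolding x_def by (rule lincomb_in[OF Bb])
    have e1: "mv3 Q (crd 3 b x) = mv3 Q c"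
      by (rule mv3_cong) (simp add: x_def crd_lincomb[OF Bb])
    have e2: "Um (mv3 Q c) = Um c'"
      by (rule Um_cong) (simp add: c_def mv3_inv[OF QP])
    have "Um (mv3 Q (crd 3 b x)) = U" using Uc e1 e2 by simp
    hence "(\<lambda>i j. Psi x (i, j)) = Tm" unfolding cPsi Phi_def U_def using conj_inv[OF QP2, of Tm] Tt by simp
    hence "Psi x = Tp" unfolding Tm_def by (auto simp: fun_eq_iff dest: fun_cong)
    thus "Tp \<in> Psi ` fst M" using x by blast
  qed
  have bij: "bij_betw Psi (fst M) (fst (sym2_mod d N))"
    unfolding bij_betw_def using inj img1 img2 by blast
  have "dmod_iso M (sym2_mod d N)" unfolding dmod_iso_def using bij lin_add lin_sc comD by blast
  thus ?thesis using DN HN detN by blast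
qed




definition rc :: "(nat \<times> nat \<Rightarrow> 'a::zero) \<Rightarrow> nat \<Rightarrow> 'a" where
  "rc T = (\<lambda>i. if i = 0 then T (0, 0) else if i = 1 then T (0, 1) else if i = 2 then T (1, 1) else 0)"

definition alpha :: "'a::comm_ring_1 mx \<Rightarrow> 'a mx" where
  "alpha \<beta> = trunc 3 (\<lambda>i j.
     if i = 0 \<and> j = 0 then 2 * \<beta> 0 0 else if i = 0 \<and> j = 1 then 2 * \<beta> 0 1 else if i = 0 \<and> j = 2 then 0
     else if i = 1 \<and> j = 0 then \<beta> 1 0 else if i = 1 \<and> j = 1 then \<beta> 0 0 + \<beta> 1 1 else if i = 1 \<and> j = 2 then \<beta> 0 1
     else if i = 2 \<and> j = 0 then 0 else if i = 2 \<and> j = 1 then 2 * \<beta> 1 0 else 2 * \<beta> 1 1)"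

lemma rc_D:
  assumes sym: "\<And>i j. T (i, j) = T (j, i)" and i: "i < 3"
  shows "rc (\<lambda>(i, j). Dop d 2 \<beta> (\<lambda>i j. T (i, j)) i j) i = d (rc T i) + mv3 (alpha \<beta>) (rc T) i"
proof -
  have s: "T (1, 0) = T (0, 1)" "T (Suc 0, 0) = T (0, Suc 0)" using sym by auto
  from i have "i = 0 \<or> i = 1 \<or> i = 2" by auto
  thus ?thesis using s
    by (elim disjE) (simp_all add: rc_def Dop_def dm_def mm2_eq tp_def mv3_def alpha_def trunc_def algebra_simps)
qed

context fixes V :: "('i \<Rightarrow> 'a::field) set" and n b assumes B: "is_basis V n b"
begin
lemma V_add: "x \<in> V \<Longrightarrow> y \<in> V \<Longrightarrow> vadd x y \<in> V"
  using crd[OF B, of x] crd[OF B, of y] lincomb_add[of "crd n b x" "crd n b y" b n] lincomb_in[OF B] by metis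
lemma V_scale: "x \<in> V \<Longrightarrow> vscale c x \<in> V"
  using crd[OF B, of x] lincomb_scale[of c "crd n b x" b n] lincomb_in[OF B] by metis
end

lemma lincomb3: "lincomb c b 3 = vadd (vadd (vscale (c 0) (b 0)) (vscale (c 1) (b 1))) (vscale (c 2) (b 2))"
  by (simp add: lincomb_def sum3 vadd_def vscale_def)

lemma lin_lincomb3:
  assumes B: "is_basis V 3 b"
    and fa: "\<forall>x\<in>V. \<forall>y\<in>V. f (vadd x y) = vadd (f x) (f y)"
    and fs: "\<forall>c. \<forall>x\<in>V. f (vscale c x) = vscale c (f x)"
  shows "f (lincomb c b 3) = vadd (vadd (vscale (c 0) (f (b 0))) (vscale (c 1) (f (b 1)))) (vscale (c 2) (f (b 2)))"
proof -
  have b: "b 0 \<in> V" "b 1 \<in> V" "b 2 \<in> V" using basis_in[OF B] by auto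
  show ?thesis unfolding lincomb3
    using b fa fs V_add[OF B] V_scale[OF B] by simp
qed


lemma forward:
  fixes d :: "'a::field_char_0 \<Rightarrow> 'a" and M :: "('i, 'a) dmodule" and N :: "(nat, 'a) dmodule"
  assumes D: "diff_field d" and DM: "dmod d M" and H3: "has_dim (fst M) 3"
    and DN: "dmod d N" and HN: "has_dim (fst N) 2" and detN: "dmod_iso (det_mod d N) (triv_mod d)"
    and iso: "dmod_iso M (sym2_mod d N)"
  shows "\<exists>F\<in>fst (sym2_mod d M). F \<noteq> vzero \<and> snd (sym2_mod d M) F = vzero"
proof -
  have md: "mdim (fst M) = 3" by (rule mdim_eq[OF H3])
  have mdN: "mdim (fst N) = 2" by (rule mdim_eq[OF HN])
  define b where "b = cbasis M"
  define a where "a = cmat M"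
  define \<beta> where "\<beta> = cmat N"
  have Bb: "is_basis (fst M) 3 b" unfolding b_def by (rule cbasis[OF H3])
  have Ca: "\<And>j. j < 3 \<Longrightarrow> snd M (b j) = lincomb (\<lambda>i. a i j) b 3"
    unfolding a_def b_def by (rule cmat[OF DM H3])
  obtain g where g: "g \<noteq> 0" "d g = (\<beta> 0 0 + \<beta> 1 1) * g"
    using det_iso_g[OF D detN] mdN by (auto simp: \<beta>_def sum2)
  obtain f where bij: "bij_betw f (fst M) (fst (sym2_mod d N))"
    and fa: "\<forall>x\<in>fst M. \<forall>y\<in>fst M. f (vadd x y) = vadd (f x) (f y)"
    and fs: "\<forall>c. \<forall>x\<in>fst M. f (vscale c x) = vscale c (f x)"
    and fD: "\<forall>x\<in>fst M. f (snd M x) = snd (sym2_mod d N) (f x)"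
    using iso unfolding dmod_iso_def by blast
  have fsym: "\<And>x i j. x \<in> fst M \<Longrightarrow> f x (i, j) = f x (j, i)"
    using bij by (auto simp: bij_betw_def sym2_fst)
  have flin: "\<And>c. rc (f (lincomb c b 3)) = (\<lambda>l. c 0 * rc (f (b 0)) l + c 1 * rc (f (b 1)) l + c 2 * rc (f (b 2)) l)"
    by (simp add: lin_lincomb3[OF Bb fa fs] rc_def fun_eq_iff vadd_def vscale_def)
  define R where "R = trunc 3 (\<lambda>i j. rc (f (b j)) i)"
  define \<alpha> where "\<alpha> = alpha \<beta>"
  have relR: "mm 3 R a = mm 3 \<alpha> R + dm d 3 R"
  proof (intro ext)
    fix l j show "mm 3 R a l j = (mm 3 \<alpha> R + dm d 3 R) l j"
    proof (cases "l < 3 \<and> j < 3")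
      case True
      hence l: "l < 3" and j: "j < 3" by auto
      have bj: "b j \<in> fst M" using basis_in[OF Bb j] .
      have "rc (f (snd M (b j))) l = rc (snd (sym2_mod d N) (f (b j))) l" using fD bj by simp
      also have "\<dots> = d (rc (f (b j)) l) + mv3 \<alpha> (rc (f (b j))) l"
        unfolding sym2_snd mdN \<alpha>_def \<beta>_def by (rule rc_D[of "f (b j)", OF fsym[OF bj] l])
      finally have e: "rc (f (snd M (b j))) l = d (rc (f (b j)) l) + mv3 \<alpha> (rc (f (b j))) l" .
      have "rc (f (snd M (b j))) l = a 0 j * R l 0 + a 1 j * R l 1 + a 2 j * R l 2"
        unfolding Ca[OF j] flin using l by (simp add: R_def trunc_def)
      moreover have "mv3 \<alpha> (rc (f (b j))) l = \<alpha> l 0 * R 0 j + \<alpha> l 1 * R 1 j + \<alpha> l 2 * R 2 j"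
        using j by (simp add: mv3_def R_def trunc_def)
      ultimately show ?thesis using e l j by (simp add: mm3_eq dm_def R_def trunc_def algebra_simps)
    qed (auto simp: mm3_eq dm_def)
  qed
  define E :: "nat \<Rightarrow> nat \<times> nat \<Rightarrow> 'a" where "E k = (\<lambda>(i,j). if k = 0 then (if i = 0 \<and> j = 0 then 1 else 0)
     else if k = 1 then (if (i = 0 \<and> j = 1) \<or> (i = 1 \<and> j = 0) then 1 else 0) else (if i = 1 \<and> j = 1 then 1 else 0))" for k
  have Ein: "\<And>k. E k \<in> fst (sym2_mod d N)" unfolding sym2_fst mdN by (auto simp: E_def)
  have rcE: "\<And>k l. k < 3 \<Longrightarrow> l < 3 \<Longrightarrow> rc (E k) l = (if l = k then 1 else 0)"
    by (auto simp: E_def rc_def dest!: less3_cases)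
  define xk where "xk k = inv_into (fst M) f (E k)" for k
  have xk: "\<And>k. xk k \<in> fst M" "\<And>k. f (xk k) = E k"
  proof -
    fix k
    have "E k \<in> f ` fst M" using bij Ein by (simp add: bij_betw_def)
    thus "xk k \<in> fst M" "f (xk k) = E k" unfolding xk_def
      by (rule inv_into_into, rule f_inv_into_f)
  qed
  define Rinv where "Rinv = trunc 3 (\<lambda>i k. crd 3 b (xk k) i)"
  have RRi: "mm 3 R Rinv = idm 3"
  proof (intro ext)
    fix l k show "mm 3 R Rinv l k = idm 3 l k"
    proof (cases "l < 3 \<and> k < 3")
      case True
      have "rc (f (xk k)) l = rc (f (lincomb (crd 3 b (xk k)) b 3)) l" using crd[OF Bb xk(1)[of k]] by simp
      also have "\<dots> = mm 3 R Rinv l k" unfolding flin using True by (simp add: mm3_eq R_def Rinv_def trunc_def algebra_simps)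
      finally show ?thesis using True xk(2) rcE by (simp add: idm_def)
    qed (auto simp: mm3_eq idm_def)
  qed
  have RiR: "mm 3 Rinv R = idm 3" by (rule lr_inv3(1)[OF RRi])
  have relinv: "mm 3 Rinv \<alpha> = mm 3 a Rinv + dm d 3 Rinv" by (rule inv_rel[OF D RRi RiR relR])
  define h where "h = inverse (g ^ 2)"
  have h0: "h \<noteq> 0" using g by (simp add: h_def)
  have dh: "d h = - 2 * (\<beta> 0 0 + \<beta> 1 1) * h"
  proof -
    have dG: "d (g^2) = 2 * (\<beta> 0 0 + \<beta> 1 1) * g^2" by (simp add: power2_eq_square dmul[OF D] g(2) algebra_simps)
    have "d h = - d (g^2) / (g^2)^2" unfolding h_def by (rule dinv[OF D]) (simp add: g)
    also have "\<dots> = - 2 * (\<beta> 0 0 + \<beta> 1 1) * h" unfolding dG h_def using g(1)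
      by (simp add: field_simps power2_eq_square)
    finally show ?thesis .
  qed
  define SE :: "'a mx" where "SE = (\<lambda>i j. if (i = 0 \<and> j = 2) \<or> (i = 2 \<and> j = 0) then h
      else if i = 1 \<and> j = 1 then - h / 2 else 0)"
  have dh2: "d (- h / 2) = (\<beta> 0 0 + \<beta> 1 1) * h"
  proof -
    have "d (inverse (2::'a)) = - d 2 / 2^2" by (rule dinv[OF D]) simp
    hence i2: "d (inverse (2::'a)) = 0" by (simp add: dnumeral[OF D])
    have "d (h * inverse 2) = d h * inverse 2" by (simp only: dmul[OF D] i2) simp
    moreover have "- h / 2 = - (h * inverse 2)" by (simp only: divide_inverse minus_mult_left)
    ultimately have "d (- h / 2) = - (d h * inverse 2)" by (simp only: dneg[OF D])
    moreover have "- (d h * inverse 2) = (\<beta> 0 0 + \<beta> 1 1) * h" unfolding dh by (simp add: field_simps)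
    ultimately show ?thesis by simp
  qed
  hence dh3: "d (- (h / 2)) = (\<beta> 0 0 + \<beta> 1 1) * h" by simp
  have HE: "Dop d 3 \<alpha> SE = 0"
  proof (intro ext)
    fix i j show "Dop d 3 \<alpha> SE i j = 0 i j"
    proof (cases "i < 3 \<and> j < 3")
      case True
      hence "i < 3" "j < 3" by auto
      thus ?thesis
        by (cases rule: cases33) (simp_all add: Dop_def dm_def mm3_eq tp_def SE_def \<alpha>_def alpha_def trunc_def dh dh3 d0[OF D] algebra_simps)
    qed (auto simp: Dop_def dm_def mm3_eq)
  qed
  define SM where "SM = mm 3 (mm 3 Rinv SE) (tp Rinv)"
  have HM: "Dop d 3 a SM = 0" unfolding SM_def transport[OF D relinv] HE by simp
  have SEt: "trunc 3 SE = SE" by (auto simp: trunc_def SE_def fun_eq_iff)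
  have SMnz: "SM \<noteq> 0"
  proof
    assume "SM = 0"
    hence "mm 3 (mm 3 R SM) (tp R) = 0" by simp
    hence "SE = 0" unfolding SM_def conj_inv[OF RRi] SEt .
    hence "SE 0 2 = 0" by simp
    thus False using h0 by (simp add: SE_def)
  qed
  have SEtp: "tp SE = SE" by (auto simp: tp_def SE_def fun_eq_iff)
  have SMtp: "tp SM = SM" unfolding SM_def conj_tp SEtp ..
  define F where "F = (\<lambda>(i, j). SM i j)"
  have "F \<in> fst (sym2_mod d M)"
    unfolding sym2_fst md
  proof (intro CollectI allI conjI impI)
    fix i j
    show "F (i, j) = F (j, i)" using fun_cong[OF fun_cong[OF SMtp, of j], of i] by (simp add: F_def tp_def)
    assume "3 \<le> i" thus "F (i, j) = 0" by (simp add: F_def SM_def mm_def)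
  qed
  moreover have "F \<noteq> vzero"
  proof
    assume "F = vzero"
    hence "SM = 0" by (auto simp: F_def vzero_def fun_eq_iff dest: fun_cong)
    thus False using SMnz by simp
  qed
  moreover have "snd (sym2_mod d M) F = vzero"
    unfolding sym2_snd md using HM by (simp add: F_def a_def vzero_def fun_eq_iff)
  ultimately show ?thesis by blast
qed

theorem corollary2p2:
  fixes d :: "'a::field_char_0 \<Rightarrow> 'a" and M :: "('i, 'a) dmodule"
  assumes "diff_field d"
    and "C1_field TYPE('a)"
    and "dmod d M"
    and "irreducible_dmod d M"
    and "has_dim (fst M) 3"
    and "dmod_iso (det_mod d M) (triv_mod d)"
  shows "(\<exists>N :: (nat, 'a) dmodule. dmod d N \<and> has_dim (fst N) 2
            \<and> dmod_iso (det_mod d N) (triv_mod d) \<and> dmod_iso M (sym2_mod d N))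
         \<longleftrightarrow> (\<exists>F\<in>fst (sym2_mod d M). F \<noteq> vzero \<and> snd (sym2_mod d M) F = vzero)"
proof
  assume "\<exists>N :: (nat, 'a) dmodule. dmod d N \<and> has_dim (fst N) 2
            \<and> dmod_iso (det_mod d N) (triv_mod d) \<and> dmod_iso M (sym2_mod d N)"
  then obtain N :: "(nat, 'a) dmodule" where N: "dmod d N" "has_dim (fst N) 2"
    "dmod_iso (det_mod d N) (triv_mod d)" "dmod_iso M (sym2_mod d N)" by blast
  show "\<exists>F\<in>fst (sym2_mod d M). F \<noteq> vzero \<and> snd (sym2_mod d M) F = vzero"
    by (rule forward[OF assms(1) assms(3) assms(5) N])
next
  assume "\<exists>F\<in>fst (sym2_mod d M). F \<noteq> vzero \<and> snd (sym2_mod d M) F = vzero"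
  then obtain F where F: "F \<in> fst (sym2_mod d M)" "F \<noteq> vzero" "snd (sym2_mod d M) F = vzero" by blast
  show "\<exists>N :: (nat, 'a) dmodule. dmod d N \<and> has_dim (fst N) 2
            \<and> dmod_iso (det_mod d N) (triv_mod d) \<and> dmod_iso M (sym2_mod d N)"
    by (rule backward[OF assms F])
qed

end
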